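(* Let $N\ge 2$, let $\rho_1,\dots,\rho_N$ be two-qubit density operators, $\rho_k$ acting on qubits $((k-1)_2,k_1)$, and let $\rho_{\mathrm{in}}=\bigotimes_{k=1}^N\rho_k$. Let $\mathcal P$ be any swap-and-correct protocol for the chain, with induced non-postselected swapping channel $\Lambda_{\mathcal P}$, and let $\mathcal B_{[N]}(\rho_{\mathrm{in}})=\bigotimes_{k=1}^N\mathcal B(\rho_k)$ (each $\mathcal B$ acting on the two qubits of $\rho_k$). Then $$\mathcal B\big(\Lambda_{\mathcal P}(\rho_{\mathrm{in}})\big)=\Lambda_{\mathcal P}\big(\mathcal B_{[N]}(\rho_{\mathrm{in}})\big)=\Lambda_{\mathrm{seq}}\big(\mathcal B_{[N]}(\rho_{\mathrm{in}})\big),$$ where $\mathcal B$ on the left acts on the output qubits $(0_2,N_1)$ and $\mathrm{seq}$ is the sequential swapping protocol. In particular this quantity does not depend on $\mathcal P$.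
   Context: Bell states: $|\Psi_{mn}\rangle=(I_2\otimes X^mZ^n)\tfrac{1}{\sqrt2}(|00\rangle+|11\rangle)$, $m,n\in\{0,1\}$, with $X,Y,Z$ the Pauli matrices. Bell-diagonal twirl of a two-qubit state: $\mathcal B(\rho)=\tfrac14\sum_{P\in\{I,X,Y,Z\}}(P\otimes P)\rho(P\otimes P)^\dagger$; it equals $\sum_{m,n}\langle\Psi_{mn}|\rho|\Psi_{mn}\rangle\,|\Psi_{mn}\rangle\langle\Psi_{mn}|$. Let $A=\{I,X,Z,XZ\}$. Repeater chain: nodes $0,1,\dots,N$; end node $0$ holds qubit $0_2$, end node $N$ holds qubit $N_1$, each repeater node $k\in\{1,\dots,N-1\}$ holds qubits $k_1,k_2$. A syndrome is $\vec s=(s_1,\dots,s_{N-1})\in A^{N-1}$, where $s_k=X^mZ^n$ records that the Bell-state measurement (BSM) at node $k$ on $(k_1,k_2)$ projected onto $|\Psi_{mn}\rangle_{k_1k_2}$; write $|\Psi_{s_k}\rangle$ for this state. A swap-and-correct protocol is a map $\mathcal P:A^{N-1}\to A^{N+1}$, $\vec s\mapsto(\mathcal P_0(\vec s),\dots,\mathcal P_N(\vec s))$, with $\mathcal P_k(\vec s)$ the Pauli correction applied at node $k$ (for repeater nodes, to qubit $k_1$, before its BSM), such that (A) there is a permutation $\alpha$ of $\{1,\dots,N-1\}$ (the order of the BSMs) such that for each $k$, $\mathcal P_{\alpha(k)}(\vec s)$ depends only on $s_{\alpha(1)},\dots,s_{\alpha(k-1)}$; and (B) for every syndrome $\vec s$,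 the normalised output obtained from $|\Psi_{00}\rangle\langle\Psi_{00}|^{\otimes N}$ is $|\Psi_{00}\rangle\langle\Psi_{00}|$ on $(0_2,N_1)$. For a syndrome $\vec s$ define $\Lambda_{\mathcal P,\vec s}(\rho)=\mathrm{Tr}_{\text{repeater qubits}}\big[\big(\bigotimes_{k=1}^{N-1}|\Psi_{s_k}\rangle\langle\Psi_{s_k}|_{k_1k_2}\big)C_{\vec s}\rho C_{\vec s}^\dagger\big]$, where $C_{\vec s}$ applies $\mathcal P_0(\vec s)$ to $0_2$, $\mathcal P_N(\vec s)$ to $N_1$ and $\mathcal P_k(\vec s)$ to $k_1$ for $1\le k\le N-1$; the non-postselected swapping channel is $\Lambda_{\mathcal P}=\sum_{\vec s\in A^{N-1}}\Lambda_{\mathcal P,\vec s}$, with output on qubits $(0_2,N_1)$. The sequential protocol $\mathrm{seq}$ has $\mathcal P_0(\vec s)=\mathcal P_1(\vec s)=I$ and $\mathcal P_k(\vec s)=s_{k-1}$ for $k=2,\dots,N$. *)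

theory Defs
  imports Complex_Main "HOL-Library.FuncSet"
begin

text \<open>Computational basis states of a register of qubits labelled by natural numbers are
 assignments nat => bool.  An operator on such a register is its matrix
 (x,y) |-> <x|A|y>.  Two-qubit operators are indexed by bool x bool (first, second qubit),
 one-qubit operators by bool.\<close>

type_synonym qop = "(nat \<Rightarrow> bool) \<Rightarrow> (nat \<Rightarrow> bool) \<Rightarrow> complex"
type_synonym qop2 = "bool \<times> bool \<Rightarrow> bool \<times> bool \<Rightarrow> complex"
type_synonym qop1 = "bool \<Rightarrow> bool \<Rightarrow> complex"

definition bas :: "nat set \<Rightarrow> (nat \<Rightarrow> bool) set" where
  "bas Q = {f. \<forall>i. i \<notin> Q \<longrightarrow> \<not> f i}"

definition fmult :: "nat \<Rightarrow> qop \<Rightarrow> qop \<Rightarrow> qop" where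
  "fmult n A B = (\<lambda>x y. \<Sum>z\<in>bas {..<n}. A x z * B z y)"

definition fadj :: "qop \<Rightarrow> qop" where
  "fadj A = (\<lambda>x y. cnj (A y x))"

definition mult2 :: "qop2 \<Rightarrow> qop2 \<Rightarrow> qop2" where
  "mult2 A B = (\<lambda>u w. \<Sum>v\<in>UNIV. A u v * B v w)"

definition adj2 :: "qop2 \<Rightarrow> qop2" where
  "adj2 A = (\<lambda>u w. cnj (A w u))"

definition kron1 :: "qop1 \<Rightarrow> qop1 \<Rightarrow> qop2" where
  "kron1 U V = (\<lambda>u w. U (fst u) (fst w) * V (snd u) (snd w))"

definition tr2 :: "qop2 \<Rightarrow> complex" where
  "tr2 M = (\<Sum>u\<in>UNIV. M u u)"

definition density2 :: "qop2 \<Rightarrow> bool" where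
  "density2 M \<longleftrightarrow> (\<forall>u w. M u w = cnj (M w u))
     \<and> (\<forall>v::bool\<times>bool \<Rightarrow> complex. Im (\<Sum>u\<in>UNIV. \<Sum>w\<in>UNIV. cnj (v u) * M u w * v w) = 0
                                 \<and> Re (\<Sum>u\<in>UNIV. \<Sum>w\<in>UNIV. cnj (v u) * M u w * v w) \<ge> 0)
     \<and> tr2 M = 1"

definition pI :: qop1 where "pI = (\<lambda>a b. if a = b then 1 else 0)"
definition pX :: qop1 where "pX = (\<lambda>a b. if a \<noteq> b then 1 else 0)"
definition pY :: qop1 where
  "pY = (\<lambda>a b. if a = b then 0 else if a then \<i> else - \<i>)"
definition pZ :: qop1 where "pZ = (\<lambda>a b. if a = b then (if a then -1 else 1) else 0)"

text \<open>The element X^m Z^n of A = {I,X,Z,XZ}, encoded by (m,n).\<close>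
definition pauli :: "bool \<times> bool \<Rightarrow> qop1" where
  "pauli s = (\<lambda>x y. if x = (y \<noteq> fst s) then (if snd s \<and> y then -1 else 1) else 0)"

text \<open>|Psi_mn> = (I (x) X^m Z^n)(|00>+|11>)/sqrt 2; amplitude at |a b>.\<close>
definition bell :: "bool \<times> bool \<Rightarrow> bool \<times> bool \<Rightarrow> complex" where
  "bell s u = pauli s (snd u) (fst u) / complex_of_real (sqrt 2)"

definition bellproj :: "bool \<times> bool \<Rightarrow> qop2" where
  "bellproj s = (\<lambda>u w. bell s u * cnj (bell s w))"

definition twirl :: "qop2 \<Rightarrow> qop2" where
  "twirl \<rho> = (\<lambda>u w. (1/4) * (\<Sum>P\<leftarrow>[pI, pX, pY, pZ].
                 mult2 (mult2 (kron1 P P) \<rho>) (adj2 (kron1 P P)) u w))"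

text \<open>Qubit labelling of the chain on register {..<2N}: (k-1)_2 = 2k-2, k_1 = 2k-1.
 So 0_2 = 0, N_1 = 2N-1, repeater node k holds k_1 = 2k-1 and k_2 = 2k, and
 rho_k acts on the pair (2k-2, 2k-1).\<close>

definition chain_in :: "nat \<Rightarrow> (nat \<Rightarrow> qop2) \<Rightarrow> qop" where
  "chain_in N \<rho> = (\<lambda>x y. \<Prod>k\<in>{1..N}.
      \<rho> k (x (2*k-2), x (2*k-1)) (y (2*k-2), y (2*k-1)))"

definition syndromes :: "nat \<Rightarrow> (nat \<Rightarrow> bool \<times> bool) set" where
  "syndromes N = PiE {1..N-1} (\<lambda>_. UNIV)"

text \<open>A protocol maps a syndrome to the corrections at nodes 0..N.\<close>
type_synonym protocol = "(nat \<Rightarrow> bool \<times> bool) \<Rightarrow> nat \<Rightarrow> bool \<times> bool"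

definition corr_gate :: "protocol \<Rightarrow> (nat \<Rightarrow> bool \<times> bool) \<Rightarrow> nat \<Rightarrow> qop1" where
  "corr_gate P s q = (if q = 0 then pauli (P s 0)
                      else if odd q then pauli (P s ((q + 1) div 2))
                      else pI)"

definition corr_op :: "nat \<Rightarrow> protocol \<Rightarrow> (nat \<Rightarrow> bool \<times> bool) \<Rightarrow> qop" where
  "corr_op N P s = (\<lambda>x y. \<Prod>q<2*N. corr_gate P s q (x q) (y q))"

definition bsm_proj :: "nat \<Rightarrow> (nat \<Rightarrow> bool \<times> bool) \<Rightarrow> qop" where
  "bsm_proj N s = (\<lambda>x y.
      (\<Prod>k\<in>{1..N-1}. bellproj (s k) (x (2*k-1), x (2*k)) (y (2*k-1), y (2*k)))
      * (if x 0 = y 0 \<and> x (2*N-1) = y (2*N-1) then 1 else 0))"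

text \<open>Lambda_{P,s}(rho) = Tr_rep[ Pi_s C_s rho C_s^dagger ], output on (0_2, N_1).\<close>
definition Lambda_s :: "nat \<Rightarrow> protocol \<Rightarrow> (nat \<Rightarrow> bool \<times> bool) \<Rightarrow> qop \<Rightarrow> qop2" where
  "Lambda_s N P s \<rho> =
     (let C = corr_op N P s;
          M = fmult (2*N) (bsm_proj N s) (fmult (2*N) (fmult (2*N) C \<rho>) (fadj C))
      in (\<lambda>u w. \<Sum>r\<in>bas {1..2*N-2}.
             M (r(0 := fst u, 2*N-1 := snd u)) (r(0 := fst w, 2*N-1 := snd w))))"

definition Lambda :: "nat \<Rightarrow> protocol \<Rightarrow> qop \<Rightarrow> qop2" where
  "Lambda N P \<rho> = (\<lambda>u w. \<Sum>s\<in>syndromes N. Lambda_s N P s \<rho> u w)"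

definition is_protocol :: "nat \<Rightarrow> protocol \<Rightarrow> bool" where
  "is_protocol N P \<longleftrightarrow>
     (\<exists>\<alpha>. bij_betw \<alpha> {1..N-1} {1..N-1} \<and>
        (\<forall>k\<in>{1..N-1}. \<forall>s\<in>syndromes N. \<forall>s'\<in>syndromes N.
            (\<forall>j\<in>{1..<k}. s (\<alpha> j) = s' (\<alpha> j)) \<longrightarrow> P s (\<alpha> k) = P s' (\<alpha> k)))
   \<and> (\<forall>s\<in>syndromes N.
        let out = Lambda_s N P s (chain_in N (\<lambda>_. bellproj (False, False)))
        in tr2 out \<noteq> 0 \<and> (\<lambda>u w. out u w / tr2 out) = bellproj (False, False))"

definition seq_prot :: "nat \<Rightarrow> protocol" where
  "seq_prot N = (\<lambda>s k. if 2 \<le> k \<and> k \<le> N then s (k - 1) else (False, False))"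

end

theory Submission
  imports Defs
begin

type_synonym sp = "bool \<times> bool \<times> bool"

definition spmat :: "sp \<Rightarrow> qop1" where
  "spmat t = (\<lambda>x y. (if fst t then -1 else 1) * pauli (snd t) x y)"
definition spmul :: "sp \<Rightarrow> sp \<Rightarrow> sp" where
  "spmul a b = (fst a \<noteq> (fst b \<noteq> (snd (snd a) \<and> fst (snd b))),
                (fst (snd a) \<noteq> fst (snd b), snd (snd a) \<noteq> snd (snd b)))"
definition sptr :: "sp \<Rightarrow> sp" where
  "sptr t = (fst t \<noteq> (fst (snd t) \<and> snd (snd t)), snd t)"
definition chi :: "bool \<times> bool \<Rightarrow> bool \<times> bool \<Rightarrow> bool" where
  "chi g D = ((fst g \<and> snd D) \<noteq> (snd g \<and> fst D))"
definition flip :: "bool \<Rightarrow> sp \<Rightarrow> sp" where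
  "flip b t = (fst t \<noteq> b, snd t)"
definition mult1 :: "qop1 \<Rightarrow> qop1 \<Rightarrow> qop1" where
  "mult1 A B = (\<lambda>x y. A x False * B False y + A x True * B True y)"
abbreviation one :: sp where "one \<equiv> (False, False, False)"

lemma spmat_mult: "mult1 (spmat a) (spmat b) = spmat (spmul a b)"
  by (cases a; cases b) (auto simp: mult1_def spmat_def spmul_def pauli_def fun_eq_iff)

lemma spmul_assoc: "spmul (spmul a b) c = spmul a (spmul b c)"
  by (cases a; cases b; cases c) (auto simp: spmul_def)
lemma spmul_one[simp]: "spmul one a = a" "spmul a one = a"
  by (cases a; auto simp: spmul_def)+
lemma spmul_inv[simp]: "spmul (sptr a) a = one" "spmul a (sptr a) = one"
  by (cases a; auto simp: spmul_def sptr_def)+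
lemma sptr_mul: "sptr (spmul a b) = spmul (sptr b) (sptr a)"
  by (cases a; cases b) (auto simp: spmul_def sptr_def)
lemma sptr_sptr[simp]: "sptr (sptr a) = a"
  by (cases a) (auto simp: sptr_def)
lemma spconj: "spmul (sptr u) (spmul V u) = flip (chi (snd u) (snd V)) V"
  by (cases u; cases V) (auto simp: spmul_def sptr_def flip_def chi_def)
lemma spmul_flip[simp]: "spmul (flip b x) y = flip b (spmul x y)" "spmul x (flip b y) = flip b (spmul x y)"
  by (cases x; cases y; auto simp: spmul_def flip_def)+
lemma flip_flip[simp]: "flip a (flip b x) = flip (a \<noteq> b) x"
  by (auto simp: flip_def)
lemma snd_spmul: "snd (spmul a b) = (fst (snd a) \<noteq> fst (snd b), snd (snd a) \<noteq> snd (snd b))"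
  by (simp add: spmul_def)
lemma snd_sptr[simp]: "snd (sptr a) = snd a" by (simp add: sptr_def)
lemma snd_flip[simp]: "snd (flip b a) = snd a" by (simp add: flip_def)
lemma fst_flip[simp]: "fst (flip b a) = (fst a \<noteq> b)" by (simp add: flip_def)
lemma chi_zero[simp]: "chi g (False,False) = False" "chi (False,False) g = False"
  by (auto simp: chi_def)

lemma bas_eq: "bas Q = (\<lambda>S i. i \<in> S) ` Pow Q"
proof
  show "bas Q \<subseteq> (\<lambda>S i. i \<in> S) ` Pow Q"
  proof
    fix x assume "x \<in> bas Q"
    then have "x = (\<lambda>i. i \<in> {i. x i})" "{i. x i} \<in> Pow Q" by (auto simp: bas_def)
    then show "x \<in> (\<lambda>S i. i \<in> S) ` Pow Q" by blast
  qed
  show "(\<lambda>S i. i \<in> S) ` Pow Q \<subseteq> bas Q" by (auto simp: bas_def)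
qed

lemma finite_bas[simp]: "finite Q \<Longrightarrow> finite (bas Q)"
  by (simp add: bas_eq)

lemma bas_empty[simp]: "bas {} = {\<lambda>_. False}"
  by (auto simp: bas_def)

lemma bas_upd_False: "x \<in> bas Q \<Longrightarrow> i \<notin> Q \<Longrightarrow> x(i := False) = x"
  by (auto simp: bas_def fun_eq_iff)

lemma sum_bas_insert:
  assumes "i \<notin> Q" "finite Q"
  shows "(\<Sum>x\<in>bas (insert i Q). h x) = (\<Sum>x\<in>bas Q. \<Sum>c\<in>UNIV. h (x(i := c)))"
proof -
  have eq: "bas (insert i Q) = bas Q \<union> (\<lambda>x. x(i := True)) ` bas Q"
  proof
    show "bas (insert i Q) \<subseteq> bas Q \<union> (\<lambda>x. x(i := True)) ` bas Q"
    proof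
      fix x assume x: "x \<in> bas (insert i Q)"
      show "x \<in> bas Q \<union> (\<lambda>x. x(i := True)) ` bas Q"
      proof (cases "x i")
        case True
        then have "x = (x(i := False))(i := True)" "x(i := False) \<in> bas Q"
          using x by (auto simp: bas_def fun_eq_iff)
        then show ?thesis by blast
      next
        case False
        then show ?thesis using x by (auto simp: bas_def)
      qed
    qed
    show "bas Q \<union> (\<lambda>x. x(i := True)) ` bas Q \<subseteq> bas (insert i Q)"
      by (auto simp: bas_def)
  qed
  have disj: "bas Q \<inter> (\<lambda>x. x(i := True)) ` bas Q = {}"
    using assms(1) by (auto simp: bas_def)
  have inj: "inj_on (\<lambda>x. x(i := True)) (bas Q)"
    using assms(1) by (auto simp: inj_on_def bas_def fun_eq_iff)
  have "(\<Sum>x\<in>bas (insert i Q). h x) = (\<Sum>x\<in>bas Q. h x) + (\<Sum>x\<in>bas Q. h (x(i := True)))"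
    unfolding eq using assms disj inj by (simp add: sum.union_disjoint sum.reindex)
  also have "\<dots> = (\<Sum>x\<in>bas Q. h (x(i := False)) + h (x(i := True)))"
    using assms by (simp add: sum.distrib bas_upd_False cong: sum.cong)
  also have "\<dots> = (\<Sum>x\<in>bas Q. \<Sum>c\<in>UNIV. h (x(i := c)))"
    by (simp add: UNIV_bool add.commute)
  finally show ?thesis .
qed

lemma lessThan_2Suc: "{..<2 * Suc N} = insert (Suc (2*N)) (insert (2*N) {..<2*N})"
  by auto

lemma sum_bas_pairs:
  fixes h :: "nat \<Rightarrow> bool \<Rightarrow> bool \<Rightarrow> complex"
  shows "(\<Sum>x\<in>bas {..<2*N}. \<Prod>k\<in>{1..N}. h k (x (2*k-2)) (x (2*k-1)))
     = (\<Prod>k\<in>{1..N}. \<Sum>p\<in>UNIV. \<Sum>q\<in>UNIV. h k p q)"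
proof (induction N)
  case 0
  then show ?case by simp
next
  case (Suc N)
  have "(\<Sum>x\<in>bas {..<2*Suc N}. \<Prod>k\<in>{1..Suc N}. h k (x (2*k-2)) (x (2*k-1)))
      = (\<Sum>x\<in>bas {..<2*N}. \<Sum>c\<in>UNIV. \<Sum>d\<in>UNIV.
            \<Prod>k\<in>{1..Suc N}. h k ((x(2*N := c, Suc (2*N) := d)) (2*k-2)) ((x(2*N := c, Suc (2*N) := d)) (2*k-1)))"
    unfolding lessThan_2Suc
    by (simp add: sum_bas_insert)
  also have "\<dots> = (\<Sum>x\<in>bas {..<2*N}. (\<Prod>k\<in>{1..N}. h k (x (2*k-2)) (x (2*k-1))) *
                     (\<Sum>c\<in>UNIV. \<Sum>d\<in>UNIV. h (Suc N) c d))"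
  proof (rule sum.cong[OF refl])
    fix x
    have "\<And>c d. (\<Prod>k\<in>{1..Suc N}. h k ((x(2*N := c, Suc (2*N) := d)) (2*k-2)) ((x(2*N := c, Suc (2*N) := d)) (2*k-1)))
       = (\<Prod>k\<in>{1..N}. h k (x (2*k-2)) (x (2*k-1))) * h (Suc N) c d"
    proof -
      fix c d
      have "(\<Prod>k\<in>{1..N}. h k ((x(2*N := c, Suc (2*N) := d)) (2*k-2)) ((x(2*N := c, Suc (2*N) := d)) (2*k-1)))
          = (\<Prod>k\<in>{1..N}. h k (x (2*k-2)) (x (2*k-1)))"
        by (rule prod.cong) auto
      then show "?thesis c d" by (simp add: prod.cl_ivl_Suc mult.commute)
    qed
    note eqcd = this
    show "(\<Sum>c\<in>UNIV. \<Sum>d\<in>UNIV.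
            \<Prod>k\<in>{1..Suc N}. h k ((x(2*N := c, Suc (2*N) := d)) (2*k-2)) ((x(2*N := c, Suc (2*N) := d)) (2*k-1)))
      = (\<Prod>k\<in>{1..N}. h k (x (2*k-2)) (x (2*k-1))) * (\<Sum>c\<in>UNIV. \<Sum>d\<in>UNIV. h (Suc N) c d)"
      by (simp only: eqcd) (simp add: sum_distrib_left)
  qed
  also have "\<dots> = (\<Sum>x\<in>bas {..<2*N}. (\<Prod>k\<in>{1..N}. h k (x (2*k-2)) (x (2*k-1)))) *
                     (\<Sum>c\<in>UNIV. \<Sum>d\<in>UNIV. h (Suc N) c d)"
    by (simp only: sum_distrib_right[symmetric])
  also have "\<dots> = (\<Prod>k\<in>{1..N}. \<Sum>p\<in>UNIV. \<Sum>q\<in>UNIV. h k p q) * (\<Sum>c\<in>UNIV. \<Sum>d\<in>UNIV. h (Suc N) c d)"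
    by (simp only: Suc.IH)
  also have "\<dots> = (\<Prod>k\<in>{1..Suc N}. \<Sum>p\<in>UNIV. \<Sum>q\<in>UNIV. h k p q)"
    by simp
  finally show ?case .
qed

lemma prod_pairs:
  "(\<Prod>q<2*N. f q) = (\<Prod>k\<in>{1..(N::nat)}. f (2*k-2) * f (2*k-1))"
  by (induction N) (auto simp: prod.cl_ivl_Suc lessThan_2Suc mult.assoc mult.commute mult.left_commute)

lemma prod_alt:
  "(\<Prod>j\<in>{..2*M}. t j) = (\<Prod>k\<in>{1..Suc M}. t (2*k-2)) * (\<Prod>k\<in>{1..M}. t (2*k-1))"
proof (induction M)
  case 0 then show ?case by simp
next
  case (Suc M)
  have e: "{..2 * Suc M} = insert (Suc (Suc (2*M))) (insert (Suc (2*M)) {..2*M})" by auto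
  show ?case
    unfolding e using Suc by (simp add: prod.cl_ivl_Suc mult_ac)
qed

lemma sum_swap_mult: "(\<Sum>r\<in>A. \<Sum>c\<in>B. f r c * g c) = (\<Sum>c\<in>B. (\<Sum>r\<in>A. f r c) * (g c :: complex))"
proof -
  have "(\<Sum>r\<in>A. \<Sum>c\<in>B. f r c * g c) = (\<Sum>c\<in>B. \<Sum>r\<in>A. f r c * g c)"
    by (rule sum.swap)
  then show ?thesis by (simp add: sum_distrib_right)
qed

fun mprod :: "(nat \<Rightarrow> qop1) \<Rightarrow> nat \<Rightarrow> qop1" where
  "mprod T 0 = T 0"
| "mprod T (Suc n) = mult1 (mprod T n) (T (Suc n))"

lemma chain_sum:
  "(\<Sum>r\<in>bas {1..n}. \<Prod>j\<in>{..n}. T j ((r(0 := a, Suc n := b)) j) ((r(0 := a, Suc n := b)) (Suc j)))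
     = mprod T n a b"
proof (induction n arbitrary: b)
  case 0
  then show ?case by simp
next
  case (Suc n)
  have e: "{1..Suc n} = insert (Suc n) {1..n}" by auto
  have "(\<Sum>r\<in>bas {1..Suc n}. \<Prod>j\<in>{..Suc n}. T j ((r(0 := a, Suc (Suc n) := b)) j) ((r(0 := a, Suc (Suc n) := b)) (Suc j)))
     = (\<Sum>r\<in>bas {1..n}. \<Sum>c\<in>UNIV. \<Prod>j\<in>{..Suc n}. T j ((r(Suc n := c, 0 := a, Suc (Suc n) := b)) j) ((r(Suc n := c, 0 := a, Suc (Suc n) := b)) (Suc j)))"
    unfolding e by (simp add: sum_bas_insert)
  also have "\<dots> = (\<Sum>r\<in>bas {1..n}. \<Sum>c\<in>UNIV. (\<Prod>j\<in>{..n}. T j ((r(0 := a, Suc n := c)) j) ((r(0 := a, Suc n := c)) (Suc j))) * T (Suc n) c b)"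
  proof (intro sum.cong refl)
    fix r c
    have "(\<Prod>j\<in>{..n}. T j ((r(Suc n := c, 0 := a, Suc (Suc n) := b)) j) ((r(Suc n := c, 0 := a, Suc (Suc n) := b)) (Suc j)))
        = (\<Prod>j\<in>{..n}. T j ((r(0 := a, Suc n := c)) j) ((r(0 := a, Suc n := c)) (Suc j)))"
      by (rule prod.cong) auto
    then show "(\<Prod>j\<in>{..Suc n}. T j ((r(Suc n := c, 0 := a, Suc (Suc n) := b)) j) ((r(Suc n := c, 0 := a, Suc (Suc n) := b)) (Suc j)))
       = (\<Prod>j\<in>{..n}. T j ((r(0 := a, Suc n := c)) j) ((r(0 := a, Suc n := c)) (Suc j))) * T (Suc n) c b"
      by (simp add: atMost_Suc)
  qed
  also have "\<dots> = (\<Sum>c\<in>UNIV. mprod T n a c * T (Suc n) c b)"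
    by (simp only: sum_swap_mult Suc.IH)
  also have "\<dots> = mprod T (Suc n) a b"
    by (simp add: mult1_def UNIV_bool)
  finally show ?case .
qed

fun sprod :: "(nat \<Rightarrow> sp) \<Rightarrow> nat \<Rightarrow> sp" where
  "sprod t 0 = t 0"
| "sprod t (Suc n) = spmul (sprod t n) (t (Suc n))"

lemma mprod_sp:
  "mprod (\<lambda>j p q. c * spmat (t j) p q) n = (\<lambda>p q. c ^ Suc n * spmat (sprod t n) p q)"
proof (induction n)
  case 0 then show ?case by simp
next
  case (Suc n)
  show ?case
    by (simp add: Suc fun_eq_iff spmat_mult[symmetric]) (simp add: mult1_def algebra_simps)
qed

definition ru :: "nat \<Rightarrow> (nat \<Rightarrow> bool) \<Rightarrow> bool \<times> bool \<Rightarrow> (nat \<Rightarrow> bool)" where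
  "ru N r u = r(0 := fst u, 2*N-1 := snd u)"

definition Bs :: "nat \<Rightarrow> (nat \<Rightarrow> bool \<times> bool) \<Rightarrow> (nat \<Rightarrow> bool) \<Rightarrow> complex" where
  "Bs N s r = (\<Prod>k\<in>{1..N-1}. bell (s k) (r (2*k-1), r (2*k)))"

definition Kr :: "nat \<Rightarrow> protocol \<Rightarrow> (nat \<Rightarrow> bool \<times> bool) \<Rightarrow> bool \<times> bool \<Rightarrow> (nat \<Rightarrow> bool) \<Rightarrow> complex" where
  "Kr N P s u x = (\<Sum>r\<in>bas {1..2*N-2}. cnj (Bs N s r) * corr_op N P s (ru N r u) x)"

lemma sum4_rev:
  "(\<Sum>a\<in>A. \<Sum>b\<in>B. \<Sum>c\<in>C. \<Sum>d\<in>D. f a b c d) = (\<Sum>d\<in>D. \<Sum>c\<in>C. \<Sum>b\<in>B. \<Sum>a\<in>A. f a b c d)"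
proof -
  have "(\<Sum>a\<in>A. \<Sum>b\<in>B. \<Sum>c\<in>C. \<Sum>d\<in>D. f a b c d) = (\<Sum>a\<in>A. \<Sum>b\<in>B. \<Sum>d\<in>D. \<Sum>c\<in>C. f a b c d)"
    by (rule sum.cong[OF refl], rule sum.cong[OF refl], rule sum.swap)
  also have "\<dots> = (\<Sum>a\<in>A. \<Sum>d\<in>D. \<Sum>b\<in>B. \<Sum>c\<in>C. f a b c d)"
    by (rule sum.cong[OF refl], rule sum.swap)
  also have "\<dots> = (\<Sum>a\<in>A. \<Sum>d\<in>D. \<Sum>c\<in>C. \<Sum>b\<in>B. f a b c d)"
    by (rule sum.cong[OF refl], rule sum.cong[OF refl], rule sum.swap)
  also have "\<dots> = (\<Sum>d\<in>D. \<Sum>a\<in>A. \<Sum>c\<in>C. \<Sum>b\<in>B. f a b c d)"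
    by (rule sum.swap)
  also have "\<dots> = (\<Sum>d\<in>D. \<Sum>c\<in>C. \<Sum>a\<in>A. \<Sum>b\<in>B. f a b c d)"
    by (rule sum.cong[OF refl], rule sum.swap)
  also have "\<dots> = (\<Sum>d\<in>D. \<Sum>c\<in>C. \<Sum>b\<in>B. \<Sum>a\<in>A. f a b c d)"
    by (rule sum.cong[OF refl], rule sum.cong[OF refl], rule sum.swap)
  finally show ?thesis .
qed

lemma lessThan_ends:
  assumes "(N::nat) \<ge> 1"
  shows "{..<2*N} = insert 0 (insert (2*N-1) {1..2*N-2})"
  using assms by auto

lemma sum_ends:
  fixes H :: "(nat \<Rightarrow> bool) \<Rightarrow> complex"
  assumes "N \<ge> 1"
  shows "(\<Sum>z\<in>bas {..<2*N}. (if z 0 = a \<and> z (2*N-1) = b then H z else 0))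
       = (\<Sum>r\<in>bas {1..2*N-2}. H (r(0 := a, 2*N-1 := b)))"
proof -
  have n1: "0 \<notin> insert (2*N-1) {1..2*N-2}" using assms by auto
  have n2: "2*N-1 \<notin> {1..2*N-2}" using assms by auto
  have ne: "2*N-1 \<noteq> 0" using assms by auto
  have "(\<Sum>z\<in>bas {..<2*N}. (if z 0 = a \<and> z (2*N-1) = b then H z else 0))
      = (\<Sum>x\<in>bas (insert (2*N-1) {1..2*N-2}). \<Sum>c\<in>UNIV.
           (if (x(0 := c)) 0 = a \<and> (x(0 := c)) (2*N-1) = b
            then H (x(0 := c)) else 0))"
    unfolding lessThan_ends[OF assms] by (rule sum_bas_insert[OF n1]) simp
  also have "\<dots> = (\<Sum>r\<in>bas {1..2*N-2}. \<Sum>d\<in>UNIV. \<Sum>c\<in>UNIV.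
           (if (r(2*N-1 := d, 0 := c)) 0 = a \<and> (r(2*N-1 := d, 0 := c)) (2*N-1) = b
            then H (r(2*N-1 := d, 0 := c)) else 0))"
    by (rule sum_bas_insert[OF n2]) simp
  also have "\<dots> = (\<Sum>r\<in>bas {1..2*N-2}. H (r(0 := a, 2*N-1 := b)))"
  proof (rule sum.cong[OF refl])
    fix r :: "nat \<Rightarrow> bool"
    have tw: "\<And>x y. r(2*N-1 := x, 0 := y) = r(0 := y, 2*N-1 := x)" using ne by (simp add: fun_upd_twist)
    show "(\<Sum>d\<in>UNIV. \<Sum>c\<in>UNIV.
           (if (r(2*N-1 := d, 0 := c)) 0 = a \<and> (r(2*N-1 := d, 0 := c)) (2*N-1) = b
            then H (r(2*N-1 := d, 0 := c)) else 0)) = H (r(0 := a, 2*N-1 := b))"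
      unfolding tw using ne by (cases a; cases b; simp add: UNIV_bool)
  qed
  finally show ?thesis .
qed

lemma Bs_ru:
  assumes "N \<ge> 1"
  shows "Bs N s (ru N r u) = Bs N s r"
  unfolding Bs_def ru_def
  by (rule prod.cong) (use assms in auto)

lemma bsm_ru:
  assumes "N \<ge> 1"
  shows "bsm_proj N s (ru N r u) z = Bs N s r * cnj (Bs N s z) * (if z 0 = fst u \<and> z (2*N-1) = snd u then 1 else 0)"
proof -
  have "bsm_proj N s (ru N r u) z = Bs N s (ru N r u) * cnj (Bs N s z) *
          (if (ru N r u) 0 = z 0 \<and> (ru N r u) (2*N-1) = z (2*N-1) then 1 else 0)"
    unfolding bsm_proj_def Bs_def bellproj_def by (simp add: prod.distrib)
  moreover have "(ru N r u) 0 = fst u" "(ru N r u) (2*N-1) = snd u"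
    using assms by (auto simp: ru_def)
  ultimately show ?thesis using Bs_ru[OF assms] by auto
qed

lemma kraus:
  assumes "N \<ge> 1"
  shows "Lambda_s N P s \<rho> u w =
    (\<Sum>x\<in>bas {..<2*N}. \<Sum>y\<in>bas {..<2*N}. Kr N P s u x * \<rho> x y * cnj (Kr N P s w y))"
proof -
  define C where "C = corr_op N P s"
  define R where "R = bas {1..2*N-2}"
  define B where "B = bas {..<2*N}"
  define F where "F = (\<lambda>r r' y x. Bs N s r * cnj (Bs N s r') * C (ru N r' u) x * \<rho> x y * cnj (C (ru N r w) y))"
  have "Lambda_s N P s \<rho> u w = (\<Sum>r\<in>R. \<Sum>z\<in>B. bsm_proj N s (ru N r u) z *
          (\<Sum>z'\<in>B. (\<Sum>x\<in>B. C z x * \<rho> x z') * cnj (C (ru N r w) z')))"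
    unfolding Lambda_s_def Let_def fmult_def fadj_def C_def R_def B_def ru_def by simp
  also have "\<dots> = (\<Sum>r\<in>R. \<Sum>z\<in>B. (if z 0 = fst u \<and> z (2*N-1) = snd u then
          Bs N s r * cnj (Bs N s z) * (\<Sum>z'\<in>B. (\<Sum>x\<in>B. C z x * \<rho> x z') * cnj (C (ru N r w) z')) else 0))"
    by (rule sum.cong[OF refl], rule sum.cong[OF refl]) (simp add: bsm_ru[OF assms])
  also have "\<dots> = (\<Sum>r\<in>R. \<Sum>r'\<in>R. Bs N s r * cnj (Bs N s (ru N r' u)) *
          (\<Sum>z'\<in>B. (\<Sum>x\<in>B. C (ru N r' u) x * \<rho> x z') * cnj (C (ru N r w) z')))"
    unfolding B_def R_def ru_def by (rule sum.cong[OF refl], rule sum_ends[OF assms])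
  also have "\<dots> = (\<Sum>r\<in>R. \<Sum>r'\<in>R. \<Sum>y\<in>B. \<Sum>x\<in>B. F r r' y x)"
    unfolding F_def Bs_ru[OF assms]
    by (simp add: sum_distrib_left sum_distrib_right mult_ac)
  also have "\<dots> = (\<Sum>x\<in>B. \<Sum>y\<in>B. \<Sum>r'\<in>R. \<Sum>r\<in>R. F r r' y x)"
    by (rule sum4_rev)
  also have "\<dots> = (\<Sum>x\<in>B. \<Sum>y\<in>B. Kr N P s u x * \<rho> x y * cnj (Kr N P s w y))"
    unfolding F_def Kr_def C_def R_def
    by (simp add: sum_distrib_left sum_distrib_right mult_ac)
  finally show ?thesis unfolding B_def .
qed

definition cg :: "protocol \<Rightarrow> (nat \<Rightarrow> bool \<times> bool) \<Rightarrow> nat \<Rightarrow> bool \<times> bool" where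
  "cg P s q = (if q = 0 then P s 0 else if odd q then P s ((q + 1) div 2) else (False, False))"

lemma corr_gate_cg: "corr_gate P s q = pauli (cg P s q)"
  by (auto simp: corr_gate_def cg_def pI_def pauli_def fun_eq_iff)

definition uu :: "protocol \<Rightarrow> (nat \<Rightarrow> bool \<times> bool) \<Rightarrow> nat \<Rightarrow> sp" where
  "uu P s j = (if even j then (False, cg P s j) else sptr (False, s ((j + 1) div 2)))"
definition xx :: "(nat \<Rightarrow> bool \<times> bool) \<Rightarrow> nat \<Rightarrow> sp" where
  "xx al j = (if even j then sptr (False, al (j div 2 + 1)) else one)"
definition vv :: "protocol \<Rightarrow> (nat \<Rightarrow> bool \<times> bool) \<Rightarrow> nat \<Rightarrow> sp" where
  "vv P s j = (if even j then sptr (False, cg P s (Suc j)) else one)"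
definition tt :: "protocol \<Rightarrow> (nat \<Rightarrow> bool \<times> bool) \<Rightarrow> (nat \<Rightarrow> bool \<times> bool) \<Rightarrow> nat \<Rightarrow> sp" where
  "tt P s al j = spmul (spmul (uu P s j) (xx al j)) (vv P s j)"
definition Wt :: "nat \<Rightarrow> protocol \<Rightarrow> (nat \<Rightarrow> bool \<times> bool) \<Rightarrow> (nat \<Rightarrow> bool \<times> bool) \<Rightarrow> sp" where
  "Wt N P s al = sprod (tt P s al) (2*N-2)"

definition Ach :: "nat \<Rightarrow> (nat \<Rightarrow> bool \<times> bool) \<Rightarrow> (nat \<Rightarrow> bool) \<Rightarrow> complex" where
  "Ach N al x = (\<Prod>k\<in>{1..N}. bell (al k) (x (2*k-2), x (2*k-1)))"

definition KA :: "nat \<Rightarrow> protocol \<Rightarrow> (nat \<Rightarrow> bool \<times> bool) \<Rightarrow> (nat \<Rightarrow> bool \<times> bool) \<Rightarrow> bool \<times> bool \<Rightarrow> complex" where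
  "KA N P s al u = (\<Sum>x\<in>bas {..<2*N}. Kr N P s u x * Ach N al x)"

abbreviation isq :: complex where "isq \<equiv> 1 / complex_of_real (sqrt 2)"

lemma LF: "(\<Sum>p\<in>UNIV. \<Sum>q\<in>UNIV. pauli g1 a p * pauli g2 b q * bell al (p, q))
   = isq * spmat (spmul (spmul (False, g1) (sptr (False, al))) (sptr (False, g2))) a b"
  by (cases g1; cases g2; cases al; cases a; cases b)
     (simp_all add: UNIV_bool pauli_def bell_def spmat_def spmul_def sptr_def)

lemma LG: "cnj (bell sk (a, b)) = isq * spmat (spmul (spmul (sptr (False, sk)) one) one) a b"
  by (cases sk; cases a; cases b)
     (simp_all add: pauli_def bell_def spmat_def spmul_def sptr_def)

lemma sumC:
  "(\<Sum>x\<in>bas {..<2*N}. corr_op N P s z x * Ach N al x)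
     = (\<Prod>k\<in>{1..N}. isq * spmat (tt P s al (2*k-2)) (z (2*k-2)) (z (2*k-1)))"
proof -
  have "(\<Sum>x\<in>bas {..<2*N}. corr_op N P s z x * Ach N al x)
     = (\<Sum>x\<in>bas {..<2*N}. \<Prod>k\<in>{1..N}. pauli (cg P s (2*k-2)) (z (2*k-2)) (x (2*k-2)) *
            pauli (cg P s (2*k-1)) (z (2*k-1)) (x (2*k-1)) * bell (al k) (x (2*k-2), x (2*k-1)))"
    unfolding corr_op_def Ach_def corr_gate_cg prod_pairs by (simp add: prod.distrib)
  also have "\<dots> = (\<Prod>k\<in>{1..N}. \<Sum>p\<in>UNIV. \<Sum>q\<in>UNIV. pauli (cg P s (2*k-2)) (z (2*k-2)) p *
            pauli (cg P s (2*k-1)) (z (2*k-1)) q * bell (al k) (p, q))"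
    by (rule sum_bas_pairs)
  also have "\<dots> = (\<Prod>k\<in>{1..N}. isq * spmat (tt P s al (2*k-2)) (z (2*k-2)) (z (2*k-1)))"
  proof (rule prod.cong[OF refl])
    fix k assume k: "k \<in> {1..N}"
    have e1: "even (2*k-2)" "(2*k-2) div 2 + 1 = k" "Suc (2*k-2) = 2*k-1" using k by auto
    show "(\<Sum>p\<in>UNIV. \<Sum>q\<in>UNIV. pauli (cg P s (2*k-2)) (z (2*k-2)) p *
            pauli (cg P s (2*k-1)) (z (2*k-1)) q * bell (al k) (p, q))
        = isq * spmat (tt P s al (2*k-2)) (z (2*k-2)) (z (2*k-1))"
      unfolding LF tt_def uu_def xx_def vv_def e1 by simp
  qed
  finally show ?thesis .
qed

lemma cBs:
  "cnj (Bs N s r) = (\<Prod>k\<in>{1..N-1}. isq * spmat (tt P s al (2*k-1)) (r (2*k-1)) (r (2*k)))"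
proof -
  have "cnj (Bs N s r) = (\<Prod>k\<in>{1..N-1}. cnj (bell (s k) (r (2*k-1), r (2*k))))"
    unfolding Bs_def by simp
  also have "\<dots> = (\<Prod>k\<in>{1..N-1}. isq * spmat (tt P s al (2*k-1)) (r (2*k-1)) (r (2*k)))"
  proof (rule prod.cong[OF refl])
    fix k assume k: "k \<in> {1..N-1}"
    have e1: "odd (2*k-1)" "(2*k-1+1) div 2 = k" using k by auto
    show "cnj (bell (s k) (r (2*k-1), r (2*k))) = isq * spmat (tt P s al (2*k-1)) (r (2*k-1)) (r (2*k))"
      unfolding LG tt_def uu_def xx_def vv_def using e1 by simp
  qed
  finally show ?thesis .
qed

lemma KA_formula:
  assumes "N \<ge> 1"
  shows "KA N P s al u = isq ^ (2*N-1) * spmat (Wt N P s al) (fst u) (snd u)"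
proof -
  define T where "T = (\<lambda>j p q. isq * spmat (tt P s al j) p q)"
  obtain M where M: "N = Suc M" using assms by (cases N) auto
  have "KA N P s al u = (\<Sum>r\<in>bas {1..2*N-2}. cnj (Bs N s r) *
           (\<Sum>x\<in>bas {..<2*N}. corr_op N P s (ru N r u) x * Ach N al x))"
    unfolding KA_def Kr_def
    by (simp add: sum_distrib_left sum_distrib_right mult_ac) (rule sum.swap)
  also have "\<dots> = (\<Sum>r\<in>bas {1..2*N-2}. \<Prod>j\<in>{..2*N-2}. T j ((ru N r u) j) ((ru N r u) (Suc j)))"
  proof (rule sum.cong[OF refl])
    fix r
    have a: "(\<Prod>k\<in>{1..N-1}. isq * spmat (tt P s al (2*k-1)) (r (2*k-1)) (r (2*k)))
        = (\<Prod>k\<in>{1..N-1}. T (2*k-1) ((ru N r u) (2*k-1)) ((ru N r u) (Suc (2*k-1))))"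
      by (rule prod.cong[OF refl]) (auto simp: T_def ru_def)
    have b: "(\<Prod>k\<in>{1..N}. isq * spmat (tt P s al (2*k-2)) ((ru N r u) (2*k-2)) ((ru N r u) (2*k-1)))
        = (\<Prod>k\<in>{1..N}. T (2*k-2) ((ru N r u) (2*k-2)) ((ru N r u) (Suc (2*k-2))))"
      by (rule prod.cong[OF refl]) (auto simp: T_def Suc_diff_Suc numeral_2_eq_2)
    have c: "(\<Prod>j\<in>{..2*N-2}. T j ((ru N r u) j) ((ru N r u) (Suc j)))
        = (\<Prod>k\<in>{1..N}. T (2*k-2) ((ru N r u) (2*k-2)) ((ru N r u) (Suc (2*k-2)))) *
          (\<Prod>k\<in>{1..N-1}. T (2*k-1) ((ru N r u) (2*k-1)) ((ru N r u) (Suc (2*k-1))))"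
      using prod_alt[of "\<lambda>j. T j ((ru N r u) j) ((ru N r u) (Suc j))" M] M by simp
    show "cnj (Bs N s r) * (\<Sum>x\<in>bas {..<2*N}. corr_op N P s (ru N r u) x * Ach N al x)
        = (\<Prod>j\<in>{..2*N-2}. T j ((ru N r u) j) ((ru N r u) (Suc j)))"
      unfolding sumC cBs[of N s r P al] a b c by (simp add: mult.commute)
  qed
  also have "\<dots> = mprod T (2*N-2) (fst u) (snd u)"
  proof -
    have "Suc (2*N-2) = 2*N-1" using assms by auto
    then show ?thesis using chain_sum[where n="2*N-2" and T=T and a="fst u" and b="snd u"] unfolding ru_def by simp
  qed
  also have "\<dots> = isq ^ (2*N-1) * spmat (Wt N P s al) (fst u) (snd u)"
  proof -
    have "Suc (2*N-2) = 2*N-1" using assms by auto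
    then show ?thesis unfolding T_def mprod_sp Wt_def by simp
  qed
  finally show ?thesis .
qed

lemma sum_UNIV_bb: "(\<Sum>a\<in>(UNIV::(bool\<times>bool) set). (f a :: complex)) = f (False,False) + f (False,True) + f (True,False) + f (True,True)"
proof -
  have e: "(UNIV::(bool\<times>bool) set) = {(False,False),(False,True),(True,False),(True,True)}" by auto
  show ?thesis by (subst e) (simp add: add.assoc)
qed

definition coef :: "qop2 \<Rightarrow> bool \<times> bool \<Rightarrow> bool \<times> bool \<Rightarrow> complex" where
  "coef \<rho> a b = (\<Sum>p\<in>UNIV. \<Sum>q\<in>UNIV. cnj (bell a p) * \<rho> p q * bell b q)"

definition Gam :: "nat \<Rightarrow> (nat \<Rightarrow> (bool \<times> bool) \<times> (bool \<times> bool)) set" where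
  "Gam N = PiE {1..N} (\<lambda>_. UNIV)"

definition fa :: "(nat \<Rightarrow> (bool \<times> bool) \<times> (bool \<times> bool)) \<Rightarrow> nat \<Rightarrow> bool \<times> bool" where
  "fa g = (\<lambda>k. fst (g k))"
definition fb :: "(nat \<Rightarrow> (bool \<times> bool) \<times> (bool \<times> bool)) \<Rightarrow> nat \<Rightarrow> bool \<times> bool" where
  "fb g = (\<lambda>k. snd (g k))"

definition Cf :: "nat \<Rightarrow> (nat \<Rightarrow> qop2) \<Rightarrow> (nat \<Rightarrow> (bool \<times> bool) \<times> (bool \<times> bool)) \<Rightarrow> complex" where
  "Cf N \<rho> g = (\<Prod>k\<in>{1..N}. coef (\<rho> k) (fst (g k)) (snd (g k)))"

definition sgn_sp :: "sp \<Rightarrow> complex" where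
  "sgn_sp t = (if fst t then -1 else 1)"

lemma bell_real[simp]: "cnj (bell g u) = bell g u"
  by (cases g; cases u) (simp_all add: bell_def pauli_def)

lemma sgn_sp_real[simp]: "cnj (sgn_sp t) = sgn_sp t"
  by (simp add: sgn_sp_def)

lemma s2c: "complex_of_real (sqrt 2) * complex_of_real (sqrt 2) = 2"
proof -
  have "sqrt 2 * sqrt 2 = (2::real)" by simp
  then show ?thesis by (metis of_real_mult of_real_numeral)
qed

lemma BC: "(\<Sum>a\<in>UNIV. bell a p * cnj (bell a p')) = (if p = p' then 1 else 0)"
  unfolding sum_UNIV_bb
  by (cases p; cases p') (simp_all add: bell_def pauli_def s2c)

lemma BC': "(\<Sum>a\<in>UNIV. bell a p * bell a p') = (if p = p' then 1 else 0)"
  using BC[of p p'] by simp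

lemma mult_if01: "x * (if c then 1 else (0::complex)) = (if c then x else 0)" by simp

lemma sum_if_const: "(\<Sum>x\<in>A. if c then g x else 0) = (if c then sum g A else (0::complex))"
  by (cases c) simp_all

lemma expand: "\<rho> p q = (\<Sum>a\<in>UNIV. \<Sum>b\<in>UNIV. coef \<rho> a b * bell a p * cnj (bell b q))"
proof -
  have "(\<Sum>a\<in>UNIV. \<Sum>b\<in>UNIV. coef \<rho> a b * bell a p * cnj (bell b q))
      = (\<Sum>a\<in>UNIV. \<Sum>b\<in>UNIV. \<Sum>p'\<in>UNIV. \<Sum>q'\<in>UNIV. \<rho> p' q' * (bell a p * cnj (bell a p')) * (bell b q' * cnj (bell b q)))"
    unfolding coef_def by (simp add: sum_distrib_left sum_distrib_right mult_ac)
  also have "\<dots> = (\<Sum>q'\<in>UNIV. \<Sum>p'\<in>UNIV. \<Sum>b\<in>UNIV. \<Sum>a\<in>UNIV. \<rho> p' q' * (bell a p * cnj (bell a p')) * (bell b q' * cnj (bell b q)))"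
    by (rule sum4_rev)
  also have "\<dots> = (\<Sum>q'\<in>UNIV. \<Sum>p'\<in>UNIV. \<Sum>a\<in>UNIV. \<Sum>b\<in>UNIV. \<rho> p' q' * (bell a p * cnj (bell a p')) * (bell b q' * cnj (bell b q)))"
    by (rule sum.cong[OF refl], rule sum.cong[OF refl], rule sum.swap)
  also have "\<dots> = (\<Sum>q'\<in>UNIV. \<Sum>p'\<in>UNIV. \<rho> p' q' * (\<Sum>a\<in>UNIV. bell a p * cnj (bell a p')) * (\<Sum>b\<in>UNIV. bell b q' * cnj (bell b q)))"
    by (simp add: sum_distrib_left sum_distrib_right mult_ac)
  also have "\<dots> = \<rho> p q"
    unfolding BC by (simp add: mult_if01 sum_if_const sum.delta sum.delta')
  finally show ?thesis by simp
qed

lemma sum_pairs_UNIV: "(\<Sum>a\<in>UNIV. \<Sum>b\<in>UNIV. f a b) = (\<Sum>ab\<in>UNIV. (f (fst ab) (snd ab) :: complex))"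
  by (simp add: sum.cartesian_product UNIV_Times_UNIV[symmetric] split_def del: UNIV_Times_UNIV)

lemma chain_expand:
  "chain_in N \<rho> x y = (\<Sum>g\<in>Gam N. Cf N \<rho> g * Ach N (fa g) x * cnj (Ach N (fb g) y))"
proof -
  have "chain_in N \<rho> x y = (\<Prod>k\<in>{1..N}. \<Sum>ab\<in>UNIV.
          coef (\<rho> k) (fst ab) (snd ab) * bell (fst ab) (x (2*k-2), x (2*k-1)) * cnj (bell (snd ab) (y (2*k-2), y (2*k-1))))"
    unfolding chain_in_def
    by (rule prod.cong[OF refl]) (subst expand, simp only: sum_pairs_UNIV)
  also have "\<dots> = (\<Sum>g\<in>Gam N. \<Prod>k\<in>{1..N}.
          coef (\<rho> k) (fst (g k)) (snd (g k)) * bell (fst (g k)) (x (2*k-2), x (2*k-1)) * cnj (bell (snd (g k)) (y (2*k-2), y (2*k-1))))"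
    unfolding Gam_def by (rule prod_sum_PiE) auto
  also have "\<dots> = (\<Sum>g\<in>Gam N. Cf N \<rho> g * Ach N (fa g) x * cnj (Ach N (fb g) y))"
    unfolding Cf_def Ach_def fa_def fb_def by (simp add: prod.distrib)
  finally show ?thesis .
qed

lemma sum3_rot:
  "(\<Sum>x\<in>A. \<Sum>y\<in>B. \<Sum>g\<in>C. f x y g) = (\<Sum>g\<in>C. \<Sum>x\<in>A. \<Sum>y\<in>B. f x y g)"
proof -
  have "(\<Sum>x\<in>A. \<Sum>y\<in>B. \<Sum>g\<in>C. f x y g) = (\<Sum>x\<in>A. \<Sum>g\<in>C. \<Sum>y\<in>B. f x y g)"
    by (rule sum.cong[OF refl], rule sum.swap)
  also have "\<dots> = (\<Sum>g\<in>C. \<Sum>x\<in>A. \<Sum>y\<in>B. f x y g)"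
    by (rule sum.swap)
  finally show ?thesis .
qed

lemma Lambda_s_chain:
  assumes "N \<ge> 1"
  shows "Lambda_s N P s (chain_in N \<rho>) u w =
     (\<Sum>g\<in>Gam N. Cf N \<rho> g * KA N P s (fa g) u * cnj (KA N P s (fb g) w))"
proof -
  have "Lambda_s N P s (chain_in N \<rho>) u w =
     (\<Sum>x\<in>bas {..<2*N}. \<Sum>y\<in>bas {..<2*N}. \<Sum>g\<in>Gam N.
        Cf N \<rho> g * (Kr N P s u x * Ach N (fa g) x) * cnj (Kr N P s w y * Ach N (fb g) y))"
    unfolding kraus[OF assms] chain_expand
    by (simp add: sum_distrib_left sum_distrib_right mult_ac)
  also have "\<dots> = (\<Sum>g\<in>Gam N. \<Sum>x\<in>bas {..<2*N}. \<Sum>y\<in>bas {..<2*N}.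
        Cf N \<rho> g * (Kr N P s u x * Ach N (fa g) x) * cnj (Kr N P s w y * Ach N (fb g) y))"
    by (rule sum3_rot)
  also have "\<dots> = (\<Sum>g\<in>Gam N. Cf N \<rho> g * KA N P s (fa g) u * cnj (KA N P s (fb g) w))"
    unfolding KA_def
    by (simp add: sum_distrib_left sum_distrib_right mult_ac del: complex_cnj_mult)
  finally show ?thesis .
qed

lemma SB: "spmat t a b = complex_of_real (sqrt 2) * sgn_sp (sptr t) * bell (snd t) (a, b)"
  by (cases t; cases a; cases b) (auto simp: spmat_def sgn_sp_def sptr_def bell_def pauli_def)

lemma isq_pow: "isq ^ (2*M+1) * complex_of_real (sqrt 2) = (1/2) ^ M"
proof -
  have s2: "complex_of_real (sqrt 2) ^ 2 = 2"
    by (metis of_real_numeral of_real_power real_sqrt_pow2 zero_le_numeral)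
  have nz: "complex_of_real (sqrt 2) \<noteq> 0" by simp
  have "isq ^ (2*M+1) = (isq ^ 2) ^ M * isq" by (simp only: power_mult power_add power_one_right)
  also have "isq ^ 2 = 1/2" using s2 by (simp add: power_divide)
  finally show ?thesis using nz by simp
qed

lemma KA_bell:
  assumes "N \<ge> 1"
  shows "KA N P s al u = (1/2) ^ (N-1) * sgn_sp (sptr (Wt N P s al)) * bell (snd (Wt N P s al)) u"
proof -
  have e: "2*N-1 = 2*(N-1)+1" using assms by auto
  have "KA N P s al u = (isq ^ (2*(N-1)+1) * complex_of_real (sqrt 2)) * sgn_sp (sptr (Wt N P s al)) * bell (snd (Wt N P s al)) u"
    unfolding KA_formula[OF assms] SB e by (cases u) (simp add: mult_ac)
  then show ?thesis unfolding isq_pow .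
qed

lemma Lambda_s_formula:
  assumes "N \<ge> 1"
  shows "Lambda_s N P s (chain_in N \<rho>) u w =
     (\<Sum>g\<in>Gam N. Cf N \<rho> g * ((1/4) ^ (N-1) * (sgn_sp (sptr (Wt N P s (fa g))) * sgn_sp (sptr (Wt N P s (fb g)))))
        * bell (snd (Wt N P s (fa g))) u * bell (snd (Wt N P s (fb g))) w)"
  unfolding Lambda_s_chain[OF assms] KA_bell[OF assms]
  by (rule sum.cong[OF refl]) (simp add: mult_ac power_mult_distrib[symmetric])

definition bxor :: "bool \<times> bool \<Rightarrow> bool \<times> bool \<Rightarrow> bool \<times> bool" where
  "bxor g h = (fst g \<noteq> fst h, snd g \<noteq> snd h)"

lemma bxor_simps[simp]: "bxor (False, False) g = g" "bxor g (False, False) = g" "bxor g g = (False, False)"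
  by (auto simp: bxor_def)

lemma bxor_eq_zero: "bxor g h = (False, False) \<longleftrightarrow> g = h"
  by (cases g; cases h) (auto simp: bxor_def)

lemma snd_sprod_Suc: "snd (sprod t (Suc n)) = bxor (snd (sprod t n)) (snd (t (Suc n)))"
  by (simp add: snd_spmul bxor_def)

lemma snd_sprod_add:
  "(\<forall>j\<le>n. snd (t j) = bxor (snd (t1 j)) (snd (t2 j))) \<Longrightarrow>
     snd (sprod t n) = bxor (snd (sprod t1 n)) (snd (sprod t2 n))"
  by (induction n) (auto simp: snd_spmul bxor_def)

lemma sprod_cong: "(\<forall>j\<le>n. t j = t' j) \<Longrightarrow> sprod t n = sprod t' n"
  by (induction n) auto

definition zero :: "nat \<Rightarrow> bool \<times> bool" where "zero = (\<lambda>_. (False, False))"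

definition Hx :: "nat \<Rightarrow> (nat \<Rightarrow> bool \<times> bool) \<Rightarrow> bool \<times> bool" where
  "Hx N al = snd (sprod (xx al) (2*N-2))"

lemma Wt_snd: "snd (Wt N P s al) = bxor (snd (Wt N P s zero)) (Hx N al)"
  unfolding Wt_def Hx_def
  by (rule snd_sprod_add) (auto simp: tt_def xx_def zero_def snd_spmul bxor_def sptr_def)

lemma Wt_cong:
  assumes "N \<ge> 1" "\<forall>k\<in>{1..N}. al k = al' k"
  shows "Wt N P s al = Wt N P s al'"
  unfolding Wt_def
proof (rule sprod_cong, intro allI impI)
  fix j assume "j \<le> 2*N-2"
  then have "j div 2 + 1 \<in> {1..N}" using assms(1) by auto
  then show "tt P s al j = tt P s al' j" using assms(2) by (simp add: tt_def xx_def)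
qed

lemma CONJ3:
  "spmul (sptr (spmul (spmul u x) v)) (spmul V (spmul (spmul u y) v))
    = flip (chi (snd u) (snd V) \<noteq> chi (snd v) (snd (spmul (sptr x) (spmul V y)))) (spmul (sptr x) (spmul V y))"
proof -
  have 1: "spmul (sptr (spmul (spmul u x) v)) (spmul V (spmul (spmul u y) v))
     = spmul (sptr v) (spmul (sptr x) (spmul (sptr u) (spmul V (spmul u (spmul y v)))))"
    by (simp only: sptr_mul spmul_assoc)
  have 2: "spmul (sptr u) (spmul V (spmul u z)) = flip (chi (snd u) (snd V)) (spmul V z)" for z
  proof -
    have "spmul (sptr u) (spmul V (spmul u z)) = spmul (spmul (sptr u) (spmul V u)) z"
      by (simp only: spmul_assoc)
    then show ?thesis by (simp only: spconj spmul_flip)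
  qed
  have 3: "spmul (sptr v) (spmul (sptr x) (spmul V (spmul y v)))
      = flip (chi (snd v) (snd (spmul (sptr x) (spmul V y)))) (spmul (sptr x) (spmul V y))"
  proof -
    have "spmul (sptr v) (spmul (sptr x) (spmul V (spmul y v))) = spmul (sptr v) (spmul (spmul (sptr x) (spmul V y)) v)"
      by (simp only: spmul_assoc)
    then show ?thesis by (simp only: spconj)
  qed
  show ?thesis by (simp only: 1 2 spmul_flip 3 flip_flip)
qed

definition V0 :: "(nat \<Rightarrow> sp) \<Rightarrow> (nat \<Rightarrow> sp) \<Rightarrow> nat \<Rightarrow> sp" where
  "V0 x y n = spmul (sptr (sprod x n)) (sprod y n)"

fun bx :: "(nat \<Rightarrow> bool) \<Rightarrow> nat \<Rightarrow> bool" where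
  "bx f 0 = f 0"
| "bx f (Suc n) = (bx f n \<noteq> f (Suc n))"

definition trm :: "(nat \<Rightarrow> sp) \<Rightarrow> (nat \<Rightarrow> sp) \<Rightarrow> (nat \<Rightarrow> sp) \<Rightarrow> (nat \<Rightarrow> sp) \<Rightarrow> nat \<Rightarrow> bool" where
  "trm u v x y j = (if j = 0 then chi (snd (v 0)) (snd (V0 x y 0))
      else (chi (snd (u j)) (snd (V0 x y (j-1))) \<noteq> chi (snd (v j)) (snd (V0 x y j))))"

lemma sign_rec:
  "spmul (sptr (sprod (\<lambda>j. spmul (spmul (u j) (x j)) (v j)) n)) (sprod (\<lambda>j. spmul (spmul (u j) (y j)) (v j)) n)
     = flip (bx (trm u v x y) n) (V0 x y n)"
proof (induction n)
  case 0
  show ?case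
    using CONJ3[of "u 0" "x 0" "v 0" one "y 0"] by (simp add: trm_def V0_def)
next
  case (Suc n)
  define A where "A = sprod (\<lambda>j. spmul (spmul (u j) (x j)) (v j)) n"
  define B where "B = sprod (\<lambda>j. spmul (spmul (u j) (y j)) (v j)) n"
  have IH: "spmul (sptr A) B = flip (bx (trm u v x y) n) (V0 x y n)" using Suc A_def B_def by simp
  have "spmul (sptr (spmul A (spmul (spmul (u (Suc n)) (x (Suc n))) (v (Suc n)))))
              (spmul B (spmul (spmul (u (Suc n)) (y (Suc n))) (v (Suc n))))
      = spmul (sptr (spmul (spmul (u (Suc n)) (x (Suc n))) (v (Suc n))))
              (spmul (spmul (sptr A) B) (spmul (spmul (u (Suc n)) (y (Suc n))) (v (Suc n))))"
    by (simp only: sptr_mul spmul_assoc)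
  also have "\<dots> = flip (bx (trm u v x y) n) (spmul (sptr (spmul (spmul (u (Suc n)) (x (Suc n))) (v (Suc n))))
              (spmul (V0 x y n) (spmul (spmul (u (Suc n)) (y (Suc n))) (v (Suc n)))))"
    by (simp only: IH spmul_flip)
  also have "\<dots> = flip (bx (trm u v x y) (Suc n)) (V0 x y (Suc n))"
  proof -
    have v: "V0 x y (Suc n) = spmul (sptr (x (Suc n))) (spmul (V0 x y n) (y (Suc n)))"
      unfolding V0_def by (simp only: sprod.simps sptr_mul spmul_assoc)
    show ?thesis unfolding CONJ3 v[symmetric] by (simp add: trm_def)
  qed
  finally show ?case by (simp add: A_def B_def)
qed

lemma snd_V0: "snd (V0 x y n) = bxor (snd (sprod x n)) (snd (sprod y n))"
  by (simp add: V0_def snd_spmul bxor_def)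

lemma bx_cong: "(\<forall>j\<le>n. f j = g j) \<Longrightarrow> bx f n = bx g n"
  by (induction n) auto

lemma bx_flip1:
  "jx \<le> n \<Longrightarrow> f jx \<noteq> g jx \<Longrightarrow> (\<forall>j\<le>n. j \<noteq> jx \<longrightarrow> f j = g j) \<Longrightarrow> bx f n = (\<not> bx g n)"
proof (induction n)
  case 0 then show ?case by auto
next
  case (Suc n)
  show ?case
  proof (cases "jx = Suc n")
    case True
    then have "bx f n = bx g n" using Suc.prems by (intro bx_cong) auto
    then show ?thesis using Suc.prems True by auto
  next
    case False
    then have "bx f n = (\<not> bx g n)" using Suc by auto
    moreover have "f (Suc n) = g (Suc n)" using Suc.prems False by auto
    ultimately show ?thesis by auto
  qed
qed

lemma chi_bxor: "chi (bxor a b) D = (chi a D \<noteq> chi b D)"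
  by (cases a; cases b; cases D) (auto simp: chi_def bxor_def)

lemma chi_exists: "D \<noteq> (False, False) \<Longrightarrow> \<exists>t. chi t D"
  by (cases D) (auto simp: chi_def)

lemma sum_invol_zero:
  fixes f :: "'a \<Rightarrow> complex"
  assumes "finite S" "\<And>s. s \<in> S \<Longrightarrow> \<tau> s \<in> S" "\<And>s. s \<in> S \<Longrightarrow> \<tau> (\<tau> s) = s"
    "\<And>s. s \<in> S \<Longrightarrow> f (\<tau> s) = - f s"
  shows "sum f S = 0"
proof -
  have inj: "inj_on \<tau> S" by (metis assms(3) inj_onI)
  have im: "\<tau> ` S = S" using assms(2,3) by (auto simp: image_iff) (metis assms(2))
  have "sum f S = sum f (\<tau> ` S)" using im by simp
  also have "\<dots> = sum (f \<circ> \<tau>) S" using inj by (rule sum.reindex)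
  also have "\<dots> = - sum f S" using assms(4) by (simp add: sum_negf)
  finally show ?thesis by simp
qed

definition Ed :: "(nat \<Rightarrow> bool \<times> bool) \<Rightarrow> (nat \<Rightarrow> bool \<times> bool) \<Rightarrow> nat \<Rightarrow> bool \<times> bool" where
  "Ed a b j = snd (V0 (xx a) (xx b) j)"

lemma Ed_0: "Ed a b 0 = bxor (a 1) (b 1)"
  by (simp add: Ed_def snd_V0 xx_def)

lemma Ed_Suc: "Ed a b (Suc n) = bxor (Ed a b n) (bxor (snd (xx a (Suc n))) (snd (xx b (Suc n))))"
  unfolding Ed_def snd_V0 snd_sprod_Suc by (auto simp: bxor_def)

lemma Ed_odd: "odd (Suc n) \<Longrightarrow> Ed a b (Suc n) = Ed a b n"
  unfolding Ed_Suc by (simp add: xx_def bxor_def)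

lemma Ed_even: "even (Suc n) \<Longrightarrow> Ed a b (Suc n) = bxor (Ed a b n) (bxor (a (Suc n div 2 + 1)) (b (Suc n div 2 + 1)))"
  unfolding Ed_Suc by (simp add: xx_def)

lemma Ed_last: "Ed a b (2*N-2) = bxor (Hx N a) (Hx N b)"
  by (simp add: Ed_def snd_V0 Hx_def)

lemma nondiag_witness:
  assumes N: "N \<ge> 1" and H: "Hx N a = Hx N b" and nd: "\<exists>k\<in>{1..N}. a k \<noteq> b k"
  shows "\<exists>k\<in>{1..N-1}. Ed a b (2*k-2) \<noteq> (False, False)"
proof (rule ccontr)
  assume "\<not> ?thesis"
  then have H1: "\<forall>k\<in>{1..N-1}. Ed a b (2*k-2) = (False, False)" by auto
  have H2: "\<forall>k\<in>{1..N}. Ed a b (2*k-2) = (False, False)"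
  proof
    fix k assume k: "k \<in> {1..N}"
    show "Ed a b (2*k-2) = (False, False)"
    proof (cases "k = N")
      case True then show ?thesis using Ed_last[of a b N] H by simp
    next
      case False then show ?thesis using H1 k by auto
    qed
  qed
  have "\<forall>k\<in>{1..N}. a k = b k"
  proof
    fix k assume k: "k \<in> {1..N}"
    show "a k = b k"
    proof (cases "k = 1")
      case True
      have "Ed a b (2*1-2) = (False,False)" using H2 N by (metis atLeastAtMost_iff order_refl)
      then have "bxor (a 1) (b 1) = (False,False)" using Ed_0[of a b] by simp
      then show ?thesis using True by (simp add: bxor_eq_zero)
    next
      case False
      then have k2: "k \<ge> 2" using k by auto
      have e1: "2*k-2 = Suc (2*k-3)" "even (Suc (2*k-3))" "Suc (2*k-3) div 2 + 1 = k" using k2 by auto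
      have e2: "2*k-3 = Suc (2*(k-1)-2)" "odd (Suc (2*(k-1)-2))" using k2 by auto
      have z1: "Ed a b (2*k-2) = (False, False)" using H2 k by auto
      have "k-1 \<in> {1..N}" using k k2 by auto
      then have z2: "Ed a b (2*(k-1)-2) = (False, False)" using H2 by blast
      have "Ed a b (2*k-3) = (False, False)" using z2 Ed_odd[OF e2(2), of a b] e2(1) by simp
      then have "bxor (a k) (b k) = (False, False)"
        using z1 Ed_even[OF e1(2), of a b] e1 by simp
      then show ?thesis by (simp add: bxor_eq_zero)
    qed
  qed
  then show False using nd by auto
qed

lemma trm_eq:
  "trm (uu P s) (vv P s) (xx a) (xx b) j =
     (if even j then chi (P s (j div 2 + 1)) (Ed a b j) else chi (s ((j+1) div 2)) (Ed a b (j-1)))"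
proof (cases "j = 0")
  case True then show ?thesis by (simp add: trm_def vv_def cg_def Ed_def)
next
  case False
  show ?thesis
  proof (cases "even j")
    case True
    have "cg P s j = (False, False)" using True False by (simp add: cg_def)
    moreover have "cg P s (Suc j) = P s (j div 2 + 1)" using True by (auto simp: cg_def elim!: evenE)
    ultimately show ?thesis using True False by (simp add: trm_def uu_def vv_def Ed_def)
  next
    case odd: False
    then show ?thesis using False by (simp add: trm_def uu_def vv_def Ed_def)
  qed
qed

lemma Wt_alt: "Wt N P s al = sprod (\<lambda>j. spmul (spmul (uu P s j) (xx al j)) (vv P s j)) (2*N-2)"
  unfolding Wt_def tt_def by simp

lemma sgn_flip: "sgn_sp (flip b V) = (if b then - sgn_sp V else sgn_sp V)"
  by (simp add: sgn_sp_def flip_def)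

lemma SP: "snd a = snd b \<Longrightarrow> sgn_sp (sptr a) * sgn_sp (sptr b) = sgn_sp (spmul (sptr a) b)"
  by (cases a; cases b) (auto simp: sgn_sp_def sptr_def spmul_def)

lemma sgn_sq: "sgn_sp t * sgn_sp t = 1"
  by (simp add: sgn_sp_def)

lemma sign_prod:
  assumes "Hx N a = Hx N b"
  shows "sgn_sp (sptr (Wt N P s a)) * sgn_sp (sptr (Wt N P s b))
     = (if bx (trm (uu P s) (vv P s) (xx a) (xx b)) (2*N-2) then - sgn_sp (V0 (xx a) (xx b) (2*N-2)) else sgn_sp (V0 (xx a) (xx b) (2*N-2)))"
proof -
  have "snd (Wt N P s a) = snd (Wt N P s b)" using assms Wt_snd by metis
  then have "sgn_sp (sptr (Wt N P s a)) * sgn_sp (sptr (Wt N P s b)) = sgn_sp (spmul (sptr (Wt N P s a)) (Wt N P s b))"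
    by (rule SP)
  also have "\<dots> = sgn_sp (flip (bx (trm (uu P s) (vv P s) (xx a) (xx b)) (2*N-2)) (V0 (xx a) (xx b) (2*N-2)))"
    unfolding Wt_alt sign_rec ..
  finally show ?thesis unfolding sgn_flip .
qed

lemma bxor_invol[simp]: "bxor (bxor a t) t = a"
  by (cases a; cases t) (auto simp: bxor_def)

lemma cancel:
  assumes N: "N \<ge> 2"
    and bij: "bij_betw ord {1..N-1} {1..N-1}"
    and dep: "\<forall>k\<in>{1..N-1}. \<forall>s\<in>syndromes N. \<forall>s'\<in>syndromes N.
            (\<forall>j\<in>{1..<k}. s (ord j) = s' (ord j)) \<longrightarrow> P s (ord k) = P s' (ord k)"
    and H: "Hx N a = Hx N b" and nd: "\<exists>k\<in>{1..N}. a k \<noteq> b k"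
  shows "(\<Sum>s\<in>syndromes N. sgn_sp (sptr (Wt N P s a)) * sgn_sp (sptr (Wt N P s b))) = 0"
proof -
  define V where "V = V0 (xx a) (xx b) (2*N-2)"
  define T where "T = (\<lambda>s. trm (uu P s) (vv P s) (xx a) (xx b))"
  obtain k1 where k1: "k1 \<in> {1..N-1}" "Ed a b (2*k1-2) \<noteq> (False, False)"
    using nondiag_witness[of N a b] N H nd by auto
  define K where "K = {i\<in>{1..N-1}. Ed a b (2 * ord i - 2) \<noteq> (False, False)}"
  have finK: "finite K" by (simp add: K_def)
  obtain i1 where i1: "i1 \<in> {1..N-1}" "ord i1 = k1" using bij k1(1) by (metis bij_betw_iff_bijections)
  have neK: "K \<noteq> {}" using i1 k1 by (auto simp: K_def)
  define m where "m = Max K"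
  have mK: "m \<in> K" using finK neK by (simp add: m_def)
  have mmax: "\<And>i. i \<in> K \<Longrightarrow> i \<le> m" using finK by (simp add: m_def)
  define j0 where "j0 = ord m"
  have j0: "j0 \<in> {1..N-1}" using mK bij by (auto simp: K_def j0_def bij_betw_def)
  have Ej0: "Ed a b (2*j0-2) \<noteq> (False, False)" using mK by (simp add: K_def j0_def)
  obtain t0 where t0: "chi t0 (Ed a b (2*j0-2))" using chi_exists[OF Ej0] by auto
  define tau where "tau = (\<lambda>s::nat \<Rightarrow> bool \<times> bool. s(j0 := bxor (s j0) t0))"
  have tau_syn: "tau s \<in> syndromes N" if "s \<in> syndromes N" for s
    using that j0 by (auto simp: tau_def syndromes_def PiE_def extensional_def)
  have tau_tau: "tau (tau s) = s" for s by (simp add: tau_def)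
  have inj: "inj_on ord {1..N-1}" using bij by (simp add: bij_betw_def)
  have Plocal: "P (tau s) k = P s k" if s: "s \<in> syndromes N" and k: "k \<in> {1..N}" and E: "Ed a b (2*k-2) \<noteq> (False, False)" for s k
  proof -
    have kN: "k \<noteq> N" using E Ed_last[of a b N] H by auto
    then have k': "k \<in> {1..N-1}" using k by auto
    obtain i where i: "i \<in> {1..N-1}" "ord i = k" using bij k' by (metis bij_betw_iff_bijections)
    have iK: "i \<in> K" using i E by (simp add: K_def)
    have im: "i \<le> m" using mmax[OF iK] .
    have agree: "\<forall>j\<in>{1..<i}. tau s (ord j) = s (ord j)"
    proof
      fix j assume j: "j \<in> {1..<i}"
      have "ord j \<noteq> ord m"
      proof
        assume "ord j = ord m"
        then have "j = m" using inj j i mK by (auto simp: K_def inj_on_def)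
        then show False using j im by auto
      qed
      then show "tau s (ord j) = s (ord j)" by (simp add: tau_def j0_def)
    qed
    have "P (tau s) (ord i) = P s (ord i)"
      using dep i(1) tau_syn[OF s] s agree by blast
    then show ?thesis using i by simp
  qed
  have flipT: "bx (T (tau s)) (2*N-2) = (\<not> bx (T s) (2*N-2))" if s: "s \<in> syndromes N" for s
  proof (rule bx_flip1[where jx = "2*j0-1"])
    show "2*j0-1 \<le> 2*N-2" using j0 by auto
    have e: "odd (2*j0-1)" "(2*j0-1+1) div 2 = j0" "2*j0-1-1 = 2*j0-2" using j0 by auto
    show "T (tau s) (2*j0-1) \<noteq> T s (2*j0-1)"
      unfolding T_def trm_eq using e t0 by (simp add: tau_def chi_bxor)
    show "\<forall>j\<le>2*N-2. j \<noteq> 2*j0-1 \<longrightarrow> T (tau s) j = T s j"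
    proof (intro allI impI)
      fix j assume j: "j \<le> 2*N-2" "j \<noteq> 2*j0-1"
      show "T (tau s) j = T s j"
      proof (cases "even j")
        case True
        define k where "k = j div 2 + 1"
        have k: "k \<in> {1..N}" "2*k-2 = j" using j True N by (auto simp: k_def)
        show ?thesis
        proof (cases "Ed a b j = (False, False)")
          case True
          then show ?thesis using \<open>even j\<close> unfolding T_def trm_eq by simp
        next
          case False
          then have "P (tau s) k = P s k" using Plocal[OF s k(1)] k(2) by simp
          then show ?thesis using \<open>even j\<close> unfolding T_def trm_eq k_def by simp
        qed
      next
        case False
        have "(j+1) div 2 \<noteq> j0" using False j by auto
        then show ?thesis using False unfolding T_def trm_eq by (simp add: tau_def)
      qed
    qed
  qed
  have "(\<Sum>s\<in>syndromes N. sgn_sp (sptr (Wt N P s a)) * sgn_sp (sptr (Wt N P s b)))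
      = (\<Sum>s\<in>syndromes N. (if bx (T s) (2*N-2) then - sgn_sp V else sgn_sp V))"
    unfolding sign_prod[OF H] T_def V_def ..
  also have "\<dots> = 0"
  proof (rule sum_invol_zero[where \<tau> = tau])
    show "finite (syndromes N)" by (simp add: syndromes_def finite_PiE)
    show "\<And>s. s \<in> syndromes N \<Longrightarrow> tau s \<in> syndromes N" by (rule tau_syn)
    show "\<And>s. s \<in> syndromes N \<Longrightarrow> tau (tau s) = s" by (rule tau_tau)
    show "\<And>s. s \<in> syndromes N \<Longrightarrow> (if bx (T (tau s)) (2*N-2) then - sgn_sp V else sgn_sp V)
            = - (if bx (T s) (2*N-2) then - sgn_sp V else sgn_sp V)"
      using flipT by auto
  qed
  finally show ?thesis .
qed

lemma TWB: "twirl (\<lambda>u' w'. bell a u' * bell b w') u w = (if a = b then bell a u * bell a w else 0)"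
  unfolding twirl_def mult2_def adj2_def kron1_def sum_UNIV_bb
  by (cases a; cases b; cases u; cases w) (simp_all add: pI_def pX_def pY_def pZ_def bell_def pauli_def)

lemma twirl_add: "twirl (\<lambda>u w. f u w + g u w) u w = twirl f u w + twirl g u w"
  unfolding twirl_def mult2_def adj2_def
  by (simp add: distrib_left distrib_right sum.distrib)

lemma twirl_scale: "twirl (\<lambda>u w. c * f u w) u w = c * twirl f u w"
  unfolding twirl_def mult2_def adj2_def
  by (simp add: sum_distrib_left distrib_left mult_ac)

lemma twirl_zero: "twirl (\<lambda>u w. 0) u w = 0"
  unfolding twirl_def mult2_def adj2_def by simp

lemma twirl_sum:
  assumes "finite I"
  shows "twirl (\<lambda>u w. \<Sum>i\<in>I. f i u w) u w = (\<Sum>i\<in>I. twirl (f i) u w)"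
  using assms
proof (induction I arbitrary: u w rule: finite_induct)
  case empty then show ?case by (simp add: twirl_zero)
next
  case (insert x F)
  have "twirl (\<lambda>u w. \<Sum>i\<in>insert x F. f i u w) u w = twirl (\<lambda>u w. f x u w + (\<Sum>i\<in>F. f i u w)) u w"
    using insert by simp
  also have "\<dots> = twirl (f x) u w + twirl (\<lambda>u w. \<Sum>i\<in>F. f i u w) u w"
    using twirl_add[of "f x" "\<lambda>u w. \<Sum>i\<in>F. f i u w" u w] by simp
  finally show ?case using insert by simp
qed

lemma twirl_bell_term: "twirl (\<lambda>u w. c * bell a u * bell b w) u w = c * (if a = b then bell a u * bell a w else 0)"
  using twirl_scale[of c "\<lambda>u w. bell a u * bell b w" u w] TWB by (simp add: mult.assoc)

lemma BO: "(\<Sum>p\<in>UNIV. bell a p * bell a' p) = (if a = a' then 1 else 0)"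
  unfolding sum_UNIV_bb
  by (cases a; cases a') (simp_all add: bell_def pauli_def s2c)

lemma twirl_expand: "twirl r p q = (\<Sum>a\<in>UNIV. coef r a a * bell a p * bell a q)"
proof -
  have "twirl r p q = twirl (\<lambda>p q. \<Sum>a\<in>UNIV. \<Sum>b\<in>UNIV. coef r a b * bell a p * bell b q) p q"
  proof -
    have "r = (\<lambda>p q. \<Sum>a\<in>UNIV. \<Sum>b\<in>UNIV. coef r a b * bell a p * bell b q)"
      using expand[of r] by (simp add: fun_eq_iff)
    then show ?thesis by simp
  qed
  also have "\<dots> = (\<Sum>a\<in>UNIV. \<Sum>b\<in>UNIV. twirl (\<lambda>p q. coef r a b * bell a p * bell b q) p q)"
    by (simp add: twirl_sum)
  also have "\<dots> = (\<Sum>a\<in>UNIV. \<Sum>b\<in>UNIV. coef r a b * (if a = b then bell a p * bell a q else 0))"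
    by (simp add: twirl_bell_term)
  also have "\<dots> = (\<Sum>a\<in>UNIV. coef r a a * bell a p * bell a q)"
    by (rule sum.cong[OF refl]) (simp add: if_distrib sum.delta cong: if_cong)
  finally show ?thesis .
qed

lemma coef_twirl: "coef (twirl r) a b = (if a = b then coef r a a else 0)"
proof -
  have "coef (twirl r) a b = (\<Sum>p\<in>UNIV. \<Sum>q\<in>UNIV. \<Sum>a'\<in>UNIV. coef r a' a' * (bell a p * bell a' p) * (bell a' q * bell b q))"
    unfolding coef_def twirl_expand by (simp add: sum_distrib_left sum_distrib_right mult_ac)
  also have "\<dots> = (\<Sum>a'\<in>UNIV. \<Sum>p\<in>UNIV. \<Sum>q\<in>UNIV. coef r a' a' * (bell a p * bell a' p) * (bell a' q * bell b q))"
    by (rule sum3_rot)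
  also have "\<dots> = (\<Sum>a'\<in>UNIV. coef r a' a' * (\<Sum>p\<in>UNIV. bell a p * bell a' p) * (\<Sum>q\<in>UNIV. bell a' q * bell b q))"
    by (simp add: sum_distrib_left sum_distrib_right mult_ac)
  also have "\<dots> = (if a = b then coef r a a else 0)"
    unfolding BO by (simp add: mult_if01 sum.delta sum.delta')
  finally show ?thesis .
qed

lemma coef_bellproj: "coef (bellproj g) a b = (if a = g \<and> b = g then 1 else 0)"
proof -
  have "coef (bellproj g) a b = (\<Sum>p\<in>UNIV. \<Sum>q\<in>UNIV. (bell a p * bell g p) * (bell g q * bell b q))"
    unfolding coef_def bellproj_def by (simp add: mult_ac)
  also have "\<dots> = (\<Sum>p\<in>UNIV. bell a p * bell g p) * (\<Sum>q\<in>UNIV. bell g q * bell b q)"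
    by (simp add: sum_product)
  finally have "coef (bellproj g) a b = (\<Sum>p\<in>UNIV. bell a p * bell g p) * (\<Sum>q\<in>UNIV. bell g q * bell b q)" .
  then show ?thesis unfolding BO by auto
qed

lemma bell_norm: "(\<Sum>u\<in>UNIV. bell h u * bell h u) = 1"
  using BO[of h h] by simp

lemma if01_mult: "(if c then 1 else (0::complex)) * x = (if c then x else 0)" by simp

lemma prod_if01:
  assumes "finite A"
  shows "(\<Prod>k\<in>A. if Q k then 1 else (0::complex)) = (if \<forall>k\<in>A. Q k then 1 else 0)"
proof (cases "\<forall>k\<in>A. Q k")
  case True then show ?thesis by simp
next
  case False
  then obtain k where "k \<in> A" "\<not> Q k" by auto
  then show ?thesis using assms False by (simp add: prod_zero_iff)
qed

definition g0 :: "nat \<Rightarrow> nat \<Rightarrow> (bool \<times> bool) \<times> (bool \<times> bool)" where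
  "g0 N = restrict (\<lambda>_. ((False, False), (False, False))) {1..N}"

lemma finite_Gam[simp]: "finite (Gam N)" by (simp add: Gam_def finite_PiE)

lemma g0_Gam: "g0 N \<in> Gam N" by (simp add: g0_def Gam_def)

lemma Cf_bellproj:
  assumes "g \<in> Gam N"
  shows "Cf N (\<lambda>_. bellproj (False, False)) g = (if g = g0 N then 1 else 0)"
proof -
  have "Cf N (\<lambda>_. bellproj (False, False)) g = (\<Prod>k\<in>{1..N}. if g k = ((False, False), (False, False)) then 1 else 0)"
    unfolding Cf_def coef_bellproj by (rule prod.cong[OF refl]) (auto simp: prod_eq_iff)
  also have "\<dots> = (if \<forall>k\<in>{1..N}. g k = ((False, False), (False, False)) then 1 else 0)"
    by (rule prod_if01) simp
  also have "(\<forall>k\<in>{1..N}. g k = ((False, False), (False, False))) \<longleftrightarrow> g = g0 N"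
    using assms by (auto simp: g0_def Gam_def PiE_def extensional_def fun_eq_iff)
  finally show ?thesis .
qed

lemma out_formula:
  assumes N: "N \<ge> 1"
  shows "Lambda_s N P s (chain_in N (\<lambda>_. bellproj (False, False))) u w
     = (1/4) ^ (N-1) * bell (snd (Wt N P s zero)) u * bell (snd (Wt N P s zero)) w"
proof -
  have wa: "Wt N P s (fa (g0 N)) = Wt N P s zero" "Wt N P s (fb (g0 N)) = Wt N P s zero"
    using Wt_cong[OF N] by (auto simp: fa_def fb_def g0_def zero_def)
  define F where "F = (\<lambda>g. (1/4) ^ (N-1) * (sgn_sp (sptr (Wt N P s (fa g))) * sgn_sp (sptr (Wt N P s (fb g))))
        * bell (snd (Wt N P s (fa g))) u * bell (snd (Wt N P s (fb g))) w)"
  have "Lambda_s N P s (chain_in N (\<lambda>_. bellproj (False, False))) u w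
     = (\<Sum>g\<in>Gam N. (if g = g0 N then F g else 0))"
    unfolding Lambda_s_formula[OF N] by (rule sum.cong[OF refl]) (simp add: Cf_bellproj F_def)
  also have "\<dots> = F (g0 N)"
    using g0_Gam[of N] by (simp add: sum.delta finite_Gam)
  also have "\<dots> = (1/4) ^ (N-1) * (sgn_sp (sptr (Wt N P s zero)) * sgn_sp (sptr (Wt N P s zero)))
        * bell (snd (Wt N P s zero)) u * bell (snd (Wt N P s zero)) w"
    unfolding F_def wa ..
  finally show ?thesis by (simp add: sgn_sq)
qed

lemma bell_outer_inj:
  assumes "(\<lambda>u w. bell h u * bell h w) = bellproj (False, False)"
  shows "h = (False, False)"
proof -
  have e1: "bell h (False, False) * bell h (False, False) = bell (False,False) (False, False) * cnj (bell (False,False) (False, False))"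
    and e2: "bell h (False, False) * bell h (True, True) = bell (False,False) (False, False) * cnj (bell (False,False) (True, True))"
    using assms unfolding bellproj_def by (metis)+
  show ?thesis
  proof (cases h)
    case (Pair m n)
    then show ?thesis using e1 e2 by (cases m; cases n) (auto simp: bell_def pauli_def s2c)
  qed
qed

lemma h0_protocol:
  assumes N: "N \<ge> 1" and P: "is_protocol N P" and s: "s \<in> syndromes N"
  shows "snd (Wt N P s zero) = (False, False)"
proof -
  define h where "h = snd (Wt N P s zero)"
  define out where "out = Lambda_s N P s (chain_in N (\<lambda>_. bellproj (False, False)))"
  have B: "(\<lambda>u w. out u w / tr2 out) = bellproj (False, False)"
    using P s unfolding is_protocol_def out_def Let_def by blast
  have o: "out u w = (1/4) ^ (N-1) * bell h u * bell h w" for u w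
    unfolding out_def h_def by (rule out_formula[OF N])
  have tr: "tr2 out = (1/4) ^ (N-1)"
    unfolding tr2_def o using bell_norm[of h] by (simp add: sum_distrib_left[symmetric] mult.assoc)
  have "(\<lambda>u w. out u w / tr2 out) = (\<lambda>u w. bell h u * bell h w)"
    unfolding tr o by (simp add: fun_eq_iff)
  then have "(\<lambda>u w. bell h u * bell h w) = bellproj (False, False)" using B by simp
  then show ?thesis unfolding h_def by (rule bell_outer_inj)
qed

lemma h0_seq:
  assumes N: "N \<ge> 1"
  shows "snd (Wt N (seq_prot N) s zero) = (False, False)"
proof -
  define t where "t = tt (seq_prot N) s zero"
  have cg: "cg (seq_prot N) s q = (if q = 0 then (False, False) else if odd q then
       (if 2 \<le> (q+1) div 2 \<and> (q+1) div 2 \<le> N then s ((q+1) div 2 - 1) else (False, False)) else (False, False))" for q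
    by (simp add: cg_def seq_prot_def)
  have st: "snd (t j) = bxor (snd (uu (seq_prot N) s j)) (snd (vv (seq_prot N) s j))" for j
    by (simp add: t_def tt_def snd_spmul xx_def zero_def bxor_def sptr_def)
  have main: "k + 1 \<le> N \<longrightarrow> snd (sprod t (2*k)) = (False, False)" for k
  proof (induction k)
    case 0
    show ?case by (simp add: st uu_def vv_def cg)
  next
    case (Suc k)
    show ?case
    proof
      assume k: "Suc k + 1 \<le> N"
      have e: "2 * Suc k = Suc (Suc (2*k))" by simp
      have a: "snd (t (Suc (2*k))) = s (k+1)"
        by (simp add: st uu_def vv_def)
      have b: "snd (t (Suc (Suc (2*k)))) = s (k+1)"
      proof -
        have "cg (seq_prot N) s (Suc (Suc (Suc (2*k)))) = s (k+1)"
          using k by (simp add: cg)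
        moreover have "cg (seq_prot N) s (Suc (Suc (2*k))) = (False, False)" by (simp add: cg)
        ultimately show ?thesis by (simp add: st uu_def vv_def)
      qed
      have "snd (sprod t (2*k)) = (False, False)" using Suc k by simp
      then show "snd (sprod t (2 * Suc k)) = (False, False)"
        unfolding e snd_sprod_Suc a b by simp
    qed
  qed
  have "2*(N-1) = 2*N-2" by simp
  then show ?thesis using main[of "N-1"] N by (simp add: Wt_def t_def)
qed

definition sp :: "nat \<Rightarrow> protocol \<Rightarrow> (nat \<Rightarrow> bool \<times> bool) \<Rightarrow> (nat \<Rightarrow> (bool \<times> bool) \<times> (bool \<times> bool)) \<Rightarrow> complex" where
  "sp N P s g = sgn_sp (sptr (Wt N P s (fa g))) * sgn_sp (sptr (Wt N P s (fb g)))"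

definition diag :: "nat \<Rightarrow> (nat \<Rightarrow> (bool \<times> bool) \<times> (bool \<times> bool)) \<Rightarrow> bool" where
  "diag N g \<longleftrightarrow> (\<forall>k\<in>{1..N}. fst (g k) = snd (g k))"

definition RES :: "nat \<Rightarrow> (nat \<Rightarrow> qop2) \<Rightarrow> qop2" where
  "RES N \<rho> u w = (\<Sum>g\<in>Gam N. if diag N g then Cf N \<rho> g * bell (Hx N (fa g)) u * bell (Hx N (fa g)) w else 0)"

lemma GF:
  assumes N: "N \<ge> 1" and h0: "\<forall>s\<in>syndromes N. snd (Wt N P s zero) = (False, False)"
  shows "Lambda N P (chain_in N \<rho>) u w = (\<Sum>s\<in>syndromes N. \<Sum>g\<in>Gam N.
     Cf N \<rho> g * ((1/4) ^ (N-1) * sp N P s g) * bell (Hx N (fa g)) u * bell (Hx N (fb g)) w)"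
  unfolding Lambda_def
proof (rule sum.cong[OF refl])
  fix s assume s: "s \<in> syndromes N"
  have e: "snd (Wt N P s al) = Hx N al" for al using Wt_snd[of N P s al] h0 s by simp
  show "Lambda_s N P s (chain_in N \<rho>) u w = (\<Sum>g\<in>Gam N.
     Cf N \<rho> g * ((1/4) ^ (N-1) * sp N P s g) * bell (Hx N (fa g)) u * bell (Hx N (fb g)) w)"
    unfolding Lambda_s_formula[OF N] e sp_def ..
qed

lemma Hx_cong:
  assumes "N \<ge> 1" "\<forall>k\<in>{1..N}. al k = al' k"
  shows "Hx N al = Hx N al'"
  unfolding Hx_def
proof (rule arg_cong[where f = snd], rule sprod_cong, intro allI impI)
  fix j assume "j \<le> 2*N-2"
  then have "j div 2 + 1 \<in> {1..N}" using assms(1) by auto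
  then show "xx al j = xx al' j" using assms(2) by (simp add: xx_def)
qed

lemma diag_facts:
  assumes N: "N \<ge> 1" and d: "diag N g"
  shows "sp N P s g = 1" "Hx N (fb g) = Hx N (fa g)"
proof -
  have ag: "\<forall>k\<in>{1..N}. fa g k = fb g k" using d by (simp add: diag_def fa_def fb_def)
  have "Wt N P s (fa g) = Wt N P s (fb g)" by (rule Wt_cong[OF N ag])
  then show "sp N P s g = 1" by (simp add: sp_def sgn_sq)
  show "Hx N (fb g) = Hx N (fa g)" using Hx_cong[OF N ag] by simp
qed

lemma card_syn: "card (syndromes N) = 4 ^ (N-1)"
proof -
  have c4: "card (UNIV :: (bool \<times> bool) set) = 4"
    by (simp add: UNIV_Times_UNIV[symmetric] card_cartesian_product del: UNIV_Times_UNIV)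
  show ?thesis unfolding syndromes_def by (simp add: card_PiE c4)
qed

lemma sum_syn_diag:
  assumes N: "N \<ge> 1" and d: "diag N g"
  shows "(\<Sum>s\<in>syndromes N. (1/4) ^ (N-1) * sp N P s g) = 1"
proof -
  have "(\<Sum>s\<in>syndromes N. (1/4) ^ (N-1) * sp N P s g) = of_nat (card (syndromes N)) * (1/4 :: complex) ^ (N-1)"
    using diag_facts(1)[OF N d] by simp
  also have "\<dots> = (4::complex) ^ (N-1) * (1/4) ^ (N-1)" unfolding card_syn by simp
  also have "\<dots> = (4 * (1/4 :: complex)) ^ (N-1)" by (rule power_mult_distrib[symmetric])
  finally show ?thesis by simp
qed

lemma sum_syn_nondiag:
  assumes N: "N \<ge> 2" and P: "is_protocol N P" and d: "\<not> diag N g" and H: "Hx N (fa g) = Hx N (fb g)"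
  shows "(\<Sum>s\<in>syndromes N. (1/4) ^ (N-1) * sp N P s g) = 0"
proof -
  obtain ord where bij: "bij_betw ord {1..N-1} {1..N-1}" and dep: "\<forall>k\<in>{1..N-1}. \<forall>s\<in>syndromes N. \<forall>s'\<in>syndromes N.
            (\<forall>j\<in>{1..<k}. s (ord j) = s' (ord j)) \<longrightarrow> P s (ord k) = P s' (ord k)"
    using P unfolding is_protocol_def by blast
  have nd: "\<exists>k\<in>{1..N}. fa g k \<noteq> fb g k" using d by (auto simp: diag_def fa_def fb_def)
  have "(\<Sum>s\<in>syndromes N. sp N P s g) = 0"
    unfolding sp_def by (rule cancel[OF N bij dep H nd])
  then show ?thesis by (simp add: sum_distrib_left[symmetric])
qed

lemma Cf_twirl: "Cf N (\<lambda>k. twirl (\<rho> k)) g = (if diag N g then Cf N \<rho> g else 0)"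
proof (cases "diag N g")
  case True
  then show ?thesis unfolding Cf_def coef_twirl diag_def by (auto intro!: prod.cong)
next
  case False
  then obtain k where k: "k \<in> {1..N}" "fst (g k) \<noteq> snd (g k)" by (auto simp: diag_def)
  have z: "(if fst (g k) = snd (g k) then coef (\<rho> k) (fst (g k)) (fst (g k)) else 0) = 0" using k by simp
  have "Cf N (\<lambda>k. twirl (\<rho> k)) g = 0"
    unfolding Cf_def coef_twirl by (rule prod_zero) (use k z in auto)
  then show ?thesis using False by simp
qed

lemma RHS_eq:
  assumes N: "N \<ge> 1" and h0: "\<forall>s\<in>syndromes N. snd (Wt N P s zero) = (False, False)"
  shows "Lambda N P (chain_in N (\<lambda>k. twirl (\<rho> k))) u w = RES N \<rho> u w"
proof -
  have "Lambda N P (chain_in N (\<lambda>k. twirl (\<rho> k))) u w = (\<Sum>s\<in>syndromes N. \<Sum>g\<in>Gam N.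
     (if diag N g then Cf N \<rho> g else 0) * ((1/4) ^ (N-1) * sp N P s g) * bell (Hx N (fa g)) u * bell (Hx N (fb g)) w)"
    unfolding GF[OF N h0] Cf_twirl ..
  also have "\<dots> = (\<Sum>g\<in>Gam N. \<Sum>s\<in>syndromes N.
     (if diag N g then Cf N \<rho> g else 0) * ((1/4) ^ (N-1) * sp N P s g) * bell (Hx N (fa g)) u * bell (Hx N (fb g)) w)"
    by (rule sum.swap)
  also have "\<dots> = RES N \<rho> u w"
    unfolding RES_def
  proof (rule sum.cong[OF refl])
    fix g
    show "(\<Sum>s\<in>syndromes N.
     (if diag N g then Cf N \<rho> g else 0) * ((1/4) ^ (N-1) * sp N P s g) * bell (Hx N (fa g)) u * bell (Hx N (fb g)) w)
      = (if diag N g then Cf N \<rho> g * bell (Hx N (fa g)) u * bell (Hx N (fa g)) w else 0)"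
    proof (cases "diag N g")
      case True
      have "(\<Sum>s\<in>syndromes N. Cf N \<rho> g * ((1/4) ^ (N-1) * sp N P s g) * bell (Hx N (fa g)) u * bell (Hx N (fa g)) w)
          = Cf N \<rho> g * bell (Hx N (fa g)) u * bell (Hx N (fa g)) w * (\<Sum>s\<in>syndromes N. (1/4) ^ (N-1) * sp N P s g)"
        by (simp add: sum_distrib_left mult_ac)
      then show ?thesis using True diag_facts(2)[OF N True] sum_syn_diag[OF N True] by simp
    next
      case False then show ?thesis by simp
    qed
  qed
  finally show ?thesis .
qed

lemma LHS_eq:
  assumes N: "N \<ge> 2" and P: "is_protocol N P"
  shows "twirl (Lambda N P (chain_in N \<rho>)) u w = RES N \<rho> u w"
proof -
  have N1: "N \<ge> 1" using N by simp
  have h0: "\<forall>s\<in>syndromes N. snd (Wt N P s zero) = (False, False)"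
    using h0_protocol[OF N1 P] by blast
  define X where "X = (\<lambda>s g. Cf N \<rho> g * ((1/4) ^ (N-1) * sp N P s g))"
  have L: "Lambda N P (chain_in N \<rho>) = (\<lambda>u w. \<Sum>s\<in>syndromes N. \<Sum>g\<in>Gam N. X s g * bell (Hx N (fa g)) u * bell (Hx N (fb g)) w)"
    using GF[OF N1 h0] by (simp add: fun_eq_iff X_def)
  have fs: "finite (syndromes N)" by (simp add: syndromes_def finite_PiE)
  have "twirl (Lambda N P (chain_in N \<rho>)) u w
     = (\<Sum>s\<in>syndromes N. twirl (\<lambda>u w. \<Sum>g\<in>Gam N. X s g * bell (Hx N (fa g)) u * bell (Hx N (fb g)) w) u w)"
    unfolding L by (rule twirl_sum[OF fs])
  also have "\<dots> = (\<Sum>s\<in>syndromes N. \<Sum>g\<in>Gam N. twirl (\<lambda>u w. X s g * bell (Hx N (fa g)) u * bell (Hx N (fb g)) w) u w)"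
    by (rule sum.cong[OF refl], rule twirl_sum) simp
  also have "\<dots> = (\<Sum>s\<in>syndromes N. \<Sum>g\<in>Gam N. X s g * (if Hx N (fa g) = Hx N (fb g) then bell (Hx N (fa g)) u * bell (Hx N (fa g)) w else 0))"
    by (simp only: twirl_bell_term)
  also have "\<dots> = (\<Sum>g\<in>Gam N. \<Sum>s\<in>syndromes N. X s g * (if Hx N (fa g) = Hx N (fb g) then bell (Hx N (fa g)) u * bell (Hx N (fa g)) w else 0))"
    by (rule sum.swap)
  also have "\<dots> = RES N \<rho> u w"
    unfolding RES_def
  proof (rule sum.cong[OF refl])
    fix g
    have eq: "(\<Sum>s\<in>syndromes N. X s g * Z) = Cf N \<rho> g * Z * (\<Sum>s\<in>syndromes N. (1/4) ^ (N-1) * sp N P s g)" for Z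
      by (simp add: X_def sum_distrib_left mult_ac)
    show "(\<Sum>s\<in>syndromes N. X s g * (if Hx N (fa g) = Hx N (fb g) then bell (Hx N (fa g)) u * bell (Hx N (fa g)) w else 0))
       = (if diag N g then Cf N \<rho> g * bell (Hx N (fa g)) u * bell (Hx N (fa g)) w else 0)"
    proof (cases "diag N g")
      case True
      then show ?thesis unfolding eq using diag_facts(2)[OF N1 True] sum_syn_diag[OF N1 True] by (simp add: mult_ac)
    next
      case False
      show ?thesis
      proof (cases "Hx N (fa g) = Hx N (fb g)")
        case True
        then show ?thesis unfolding eq using sum_syn_nondiag[OF N P False True] False by simp
      next
        case False
        then show ?thesis using \<open>\<not> diag N g\<close> by simp
      qed
    qed
  qed
  finally show ?thesis .
qed

theorem theorem1:
  fixes N :: nat and \<rho> :: "nat \<Rightarrow> qop2" and P :: protocol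
  assumes "N \<ge> 2"
    and "\<forall>k\<in>{1..N}. density2 (\<rho> k)"
    and "is_protocol N P"
  shows "twirl (Lambda N P (chain_in N \<rho>)) = Lambda N P (chain_in N (\<lambda>k. twirl (\<rho> k)))
       \<and> Lambda N P (chain_in N (\<lambda>k. twirl (\<rho> k)))
           = Lambda N (seq_prot N) (chain_in N (\<lambda>k. twirl (\<rho> k)))"
proof -
  have N1: "N \<ge> 1" using assms(1) by simp
  have h0P: "\<forall>s\<in>syndromes N. snd (Wt N P s zero) = (False, False)"
    using h0_protocol[OF N1 assms(3)] by blast
  have h0S: "\<forall>s\<in>syndromes N. snd (Wt N (seq_prot N) s zero) = (False, False)"
    using h0_seq[OF N1] by blast
  have A: "twirl (Lambda N P (chain_in N \<rho>)) = RES N \<rho>"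
    using LHS_eq[OF assms(1) assms(3)] by (simp add: fun_eq_iff)
  have B: "Lambda N P (chain_in N (\<lambda>k. twirl (\<rho> k))) = RES N \<rho>"
    using RHS_eq[OF N1 h0P] by (simp add: fun_eq_iff)
  have C: "Lambda N (seq_prot N) (chain_in N (\<lambda>k. twirl (\<rho> k))) = RES N \<rho>"
    using RHS_eq[OF N1 h0S] by (simp add: fun_eq_iff)
  show ?thesis using A B C by simp
qed

end
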